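(* Let $\mathcal A=\{A_i\}_{i\in\Lambda}$ be a finite collection of $SL_2(\mathbb R)$ matrices with a strictly invariant multicone $U\subset[0,\pi)$, and let $\Phi=\{\varphi_i\}_{i\in\Lambda}$, $\varphi_i=\varphi_{A_i}$, be the induced IFS. Let $c>0$, $\lambda>1$ be constants with $\|A_{\mathbf i}\|\ge c\lambda^n$ for all $\mathbf i\in\Lambda^n$, $n\in\mathbb N$ (such constants exist). Then: (i) (Bounded distortion) there exists $C'>1$ such that $\frac1{C'}\le\frac{|\varphi_{\mathbf i}'(x)|}{|\varphi_{\mathbf i}'(y)|}\le C'$ for all $x,y\in\overline U$, $\mathbf i\in\Lambda^n$, $n\in\mathbb N$; (ii) there exists $C''>0$ such that $\|\varphi_{\mathbf i}'\|_{\overline U}\le C''\lambda^{-2n}$ for all $\mathbf i\in\Lambda^n$, $n\in\mathbb N$; in particular $\Phi^k$ is contractive on $U$ in the metric of $\mathbb R/\pi\mathbb Z$ for all sufficiently large $k$; (iii) $s=s_{\mathcal A}/2$, where $s$ is the solution of $P_\Phi(s)=0$ and $s_{\mathcal A}$ is the critical exponent.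
   Context: $\mathbb{RP}^1$ is identified with $[0,\pi)\cong\mathbb R/\pi\mathbb Z$ with its metric; $\varphi_A$ is the induced action of $A$ and derivatives are taken in this coordinate. A multicone is a proper nonempty open subset of $\mathbb{RP}^1$ with finitely many components having pairwise disjoint closures; it is strictly invariant if $\varphi_i(\overline U)\subset U$ for all $i$. For $\mathbf i=i_1\ldots i_n$, $A_{\mathbf i}=A_{i_1}\cdots A_{i_n}$ and $\varphi_{\mathbf i}=\varphi_{i_1}\circ\cdots\circ\varphi_{i_n}$; $\|\cdot\|_{\overline U}$ is the sup norm on $\overline U$. Pressure: $P_\Phi(t)=\lim_n\frac1n\log\sum_{\mathbf i\in\Lambda^n}\|\varphi_{\mathbf i}'\|_{\overline U}^t$. Critical exponent: $s_{\mathcal A}=\sup\{t\ge0:\sum_{n\ge1}\sum_{\mathbf i\in\Lambda^n}\|A_{\mathbf i}\|^{-t}=\infty\}$. *)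

theory Defs
  imports "HOL-Analysis.Analysis"
begin

text \<open>RP^1 identified with [0,pi) = R / pi Z.  Reduction of a real number mod pi.\<close>
definition pmod :: "real \<Rightarrow> real" where
  "pmod x = x - pi * of_int \<lfloor>x / pi\<rfloor>"

text \<open>Signed representative in [-pi/2, pi/2] of a difference in R / pi Z.\<close>
definition pwrap :: "real \<Rightarrow> real" where
  "pwrap t = t - pi * of_int (round (t / pi))"

definition pdist :: "real \<Rightarrow> real \<Rightarrow> real" where
  "pdist x y = \<bar>pwrap (x - y)\<bar>"

text \<open>The topology of R / pi Z, carried by [0,pi) (quotient topology via pmod).\<close>
definition circ_top :: "real topology" where
  "circ_top = topology (\<lambda>S. S \<subseteq> {0..<pi} \<and> open {x. pmod x \<in> S})"

definition dirv :: "real \<Rightarrow> real^2" where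
  "dirv \<theta> = vector [cos \<theta>, sin \<theta>]"

definition pangle :: "real^2 \<Rightarrow> real" where
  "pangle v = (THE \<theta>. 0 \<le> \<theta> \<and> \<theta> < pi \<and> (\<exists>r. r \<noteq> 0 \<and> v = r *\<^sub>R dirv \<theta>))"

definition phiA :: "real^2^2 \<Rightarrow> real \<Rightarrow> real" where
  "phiA A \<theta> = pangle (A *v dirv \<theta>)"

definition cderiv :: "(real \<Rightarrow> real) \<Rightarrow> real \<Rightarrow> real" where
  "cderiv f x = (THE D. ((\<lambda>h. pwrap (f (x + h) - f x) / h) \<longlongrightarrow> D) (at 0))"

definition multicone :: "real set \<Rightarrow> bool" where
  "multicone U \<longleftrightarrow> U \<noteq> {} \<and> U \<subset> {0..<pi} \<and> openin circ_top U \<and>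
     finite (connected_components_of (subtopology circ_top U)) \<and>
     pairwise (\<lambda>C D. disjnt (circ_top closure_of C) (circ_top closure_of D))
       (connected_components_of (subtopology circ_top U))"

definition strictly_invariant :: "('i \<Rightarrow> real \<Rightarrow> real) \<Rightarrow> 'i set \<Rightarrow> real set \<Rightarrow> bool" where
  "strictly_invariant \<phi> \<Lambda> U \<longleftrightarrow> (\<forall>i\<in>\<Lambda>. \<phi> i ` (circ_top closure_of U) \<subseteq> U)"

definition words :: "'i set \<Rightarrow> nat \<Rightarrow> 'i list set" where
  "words \<Lambda> n = {is. set is \<subseteq> \<Lambda> \<and> length is = n}"

definition matw :: "('i \<Rightarrow> real^2^2) \<Rightarrow> 'i list \<Rightarrow> real^2^2" where
  "matw A is = foldr (\<lambda>i M. A i ** M) is (mat 1)"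

definition phiw :: "('i \<Rightarrow> real^2^2) \<Rightarrow> 'i list \<Rightarrow> real \<Rightarrow> real" where
  "phiw A is = foldr (\<lambda>i f. phiA (A i) \<circ> f) is id"

definition mnorm :: "real^2^2 \<Rightarrow> real" where
  "mnorm M = onorm (\<lambda>x. M *v x)"

definition dnorm :: "real set \<Rightarrow> (real \<Rightarrow> real) \<Rightarrow> real" where
  "dnorm U f = (SUP x \<in> circ_top closure_of U. \<bar>cderiv f x\<bar>)"

text \<open>The sequence whose limit defines the pressure P_Phi(t).\<close>
definition pressure_seq :: "('i \<Rightarrow> real^2^2) \<Rightarrow> 'i set \<Rightarrow> real set \<Rightarrow> real \<Rightarrow> nat \<Rightarrow> real" where
  "pressure_seq A \<Lambda> U t n = ln (\<Sum>is\<in>words \<Lambda> n. dnorm U (phiw A is) powr t) / real n"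

definition crit_exp :: "('i \<Rightarrow> real^2^2) \<Rightarrow> 'i set \<Rightarrow> real" where
  "crit_exp A \<Lambda> = Sup {t. t \<ge> 0 \<and>
     \<not> summable (\<lambda>n. \<Sum>is\<in>words \<Lambda> (Suc n). mnorm (matw A is) powr (- t))}"

end

theory Submission
  imports Defs
begin

definition d2 :: "real^2 \<Rightarrow> real^2 \<Rightarrow> real" where
  "d2 u v = u$1 * v$2 - u$2 * v$1"

lemma vec2_eq: "(u::real^2) = v \<longleftrightarrow> u$1 = v$1 \<and> u$2 = v$2"
  by (simp add: vec_eq_iff forall_2)

lemma norm2: "norm (v::real^2) = sqrt ((v$1)^2 + (v$2)^2)"
  by (simp add: norm_vec_def L2_set_def sum_2)

lemma mv1[simp]: "((M::real^2^2) *v (v::real^2)) $ 1 = M$1$1 * v$1 + M$1$2 * v$2"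
  by (simp add: matrix_vector_mult_def sum_2)
lemma mv2[simp]: "((M::real^2^2) *v (v::real^2)) $ 2 = M$2$1 * v$1 + M$2$2 * v$2"
  by (simp add: matrix_vector_mult_def sum_2)

lemma dirv1[simp]: "dirv t $ 1 = cos t" and dirv2[simp]: "dirv t $ 2 = sin t"
  by (simp_all add: dirv_def)

lemma d2_mult: "d2 (M *v u) (M *v v) = det M * d2 u v"
  by (simp add: d2_def det_2 algebra_simps)

lemma d2_dirv: "d2 (dirv a) (dirv b) = sin (b - a)"
  by (simp add: d2_def sin_diff algebra_simps)

lemma norm_dirv[simp]: "norm (dirv t) = 1"
  by (simp add: norm2)

lemma d2_scale1[simp]: "d2 (r *\<^sub>R u) v = r * d2 u v" and d2_scale2[simp]: "d2 u (r *\<^sub>R v) = r * d2 u v"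
  by (simp_all add: d2_def algebra_simps)

lemma d2_le: "\<bar>d2 u v\<bar> \<le> norm u * norm v"
proof -
  have e: "((u$1)^2 + (u$2)^2) * ((v$1)^2 + (v$2)^2) = (d2 u v)^2 + (u$1 * v$1 + u$2 * v$2)^2"
    unfolding d2_def by (simp add: power2_eq_square algebra_simps)
  have "(d2 u v)^2 \<le> ((u$1)^2 + (u$2)^2) * ((v$1)^2 + (v$2)^2)"
    unfolding e by simp
  hence "\<bar>d2 u v\<bar> \<le> sqrt (((u$1)^2 + (u$2)^2) * ((v$1)^2 + (v$2)^2))"
    using real_le_rsqrt by (metis real_sqrt_abs real_sqrt_le_mono)
  thus ?thesis by (simp add: norm2 real_sqrt_mult)
qed


lemma dirv_ne0[simp]: "dirv t \<noteq> 0"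
  using norm_dirv by (metis norm_zero zero_neq_one)

lemma sin_eq0_small: assumes "sin t = 0" "\<bar>t\<bar> < pi" shows "t = 0"
proof -
  obtain i::int where i: "t = of_int i * pi" using assms(1) sin_zero_iff_int2 by blast
  hence "\<bar>of_int i\<bar> * pi < 1 * pi" using assms(2) by (simp add: abs_mult)
  hence "\<bar>of_int i :: real\<bar> < 1" using pi_gt_zero mult_less_cancel_right_pos by blast
  hence "i = 0" by linarith
  thus ?thesis using i by simp
qed

lemma dirv_par_eq:
  assumes "0 \<le> a" "a < pi" "0 \<le> b" "b < pi" "r \<noteq> 0" "r *\<^sub>R dirv a = s *\<^sub>R dirv b"
  shows "a = b"
proof -
  have "d2 (dirv a) (r *\<^sub>R dirv a) = 0" by (simp add: d2_def algebra_simps)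
  hence "d2 (dirv a) (s *\<^sub>R dirv b) = 0" unfolding assms(6) .
  hence "s * sin (b - a) = 0" by (simp add: d2_dirv)
  moreover have "s \<noteq> 0" using assms(5,6) by (cases "s = 0") auto
  ultimately have "sin (b - a) = 0" by simp
  moreover have "\<bar>b - a\<bar> < pi" using assms(1-4) by linarith
  ultimately have "b - a = 0" by (rule sin_eq0_small)
  thus ?thesis by simp
qed

lemma dirv_exists:
  assumes "(v::real^2) \<noteq> 0"
  shows "\<exists>t r. 0 \<le> t \<and> t < pi \<and> r \<noteq> 0 \<and> v = r *\<^sub>R dirv t"
proof -
  define \<rho> where "\<rho> = norm v"
  have rp: "\<rho> > 0" using assms \<rho>_def by simp
  have r2: "\<rho>^2 = (v$1)^2 + (v$2)^2" unfolding \<rho>_def norm2 by simp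
  have "(v$1/\<rho>)^2 + (v$2/\<rho>)^2 = ((v$1)^2 + (v$2)^2) / \<rho>^2"
    by (simp add: power_divide add_divide_distrib)
  also have "\<dots> = 1" unfolding r2[symmetric] using rp by simp
  finally have "(v$1/\<rho>)^2 + (v$2/\<rho>)^2 = 1" .
  then obtain t where t: "0 \<le> t" "t < 2*pi" "v$1/\<rho> = cos t" "v$2/\<rho> = sin t"
    using sincos_total_2pi by metis
  have v: "v = \<rho> *\<^sub>R dirv t" using t rp by (simp add: vec2_eq field_simps)
  show ?thesis
  proof (cases "t < pi")
    case True thus ?thesis using t rp v by (intro exI[of _ t] exI[of _ \<rho>]) auto
  next
    case False
    have "dirv t = (-1) *\<^sub>R dirv (t - pi)" by (simp add: vec2_eq)
    hence "v = (-\<rho>) *\<^sub>R dirv (t - pi)" using v by simp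
    thus ?thesis using False t rp by (intro exI[of _ "t - pi"] exI[of _ "-\<rho>"]) auto
  qed
qed

lemma pangle_prop:
  assumes "(v::real^2) \<noteq> 0"
  shows "0 \<le> pangle v \<and> pangle v < pi \<and> (\<exists>r. r \<noteq> 0 \<and> v = r *\<^sub>R dirv (pangle v))"
proof -
  obtain t r where tr: "0 \<le> t" "t < pi" "r \<noteq> 0" "v = r *\<^sub>R dirv t" using dirv_exists[OF assms] by blast
  have "\<exists>!\<theta>. 0 \<le> \<theta> \<and> \<theta> < pi \<and> (\<exists>r. r \<noteq> 0 \<and> v = r *\<^sub>R dirv \<theta>)"
  proof (rule ex1I[of _ t])
    show "0 \<le> t \<and> t < pi \<and> (\<exists>r. r \<noteq> 0 \<and> v = r *\<^sub>R dirv t)" using tr by blast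
  next
    fix \<theta> assume "0 \<le> \<theta> \<and> \<theta> < pi \<and> (\<exists>r. r \<noteq> 0 \<and> v = r *\<^sub>R dirv \<theta>)"
    then obtain s where "0 \<le> \<theta>" "\<theta> < pi" "s \<noteq> 0" "v = s *\<^sub>R dirv \<theta>" by blast
    thus "\<theta> = t" using tr dirv_par_eq[of \<theta> t s r] by auto
  qed
  thus ?thesis unfolding pangle_def by (rule theI')
qed

lemma pangle_eqI:
  assumes "0 \<le> t" "t < pi" "r \<noteq> 0" "v = r *\<^sub>R dirv t"
  shows "pangle v = t"
proof -
  have v0: "v \<noteq> 0" using assms by simp
  from pangle_prop[OF v0] obtain s where "0 \<le> pangle v" "pangle v < pi" "s \<noteq> 0" "v = s *\<^sub>R dirv (pangle v)"
    by blast
  thus ?thesis using assms dirv_par_eq[of "pangle v" t s r] by auto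
qed

lemma pangle_scale:
  assumes "(v::real^2) \<noteq> 0" "c \<noteq> 0"
  shows "pangle (c *\<^sub>R v) = pangle v"
proof -
  define t where "t = pangle v"
  from pangle_prop[OF assms(1)] obtain r where r: "0 \<le> t" "t < pi" "r \<noteq> 0" "v = r *\<^sub>R dirv t"
    unfolding t_def[symmetric] by blast
  have "pangle (c *\<^sub>R v) = t" by (rule pangle_eqI[of _ "c * r"]) (use r assms in auto)
  thus ?thesis unfolding t_def .
qed

lemma pangle_dirv_id: "0 \<le> t \<Longrightarrow> t < pi \<Longrightarrow> pangle (dirv t) = t"
  by (rule pangle_eqI[of _ 1]) auto

lemma pmod_range: "0 \<le> pmod x \<and> pmod x < pi"
proof -
  have "of_int \<lfloor>x / pi\<rfloor> \<le> x / pi" "x / pi < of_int \<lfloor>x / pi\<rfloor> + 1" by linarith+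
  hence "pi * of_int \<lfloor>x / pi\<rfloor> \<le> pi * (x / pi)" "pi * (x / pi) < pi * (of_int \<lfloor>x / pi\<rfloor> + 1)"
    using pi_gt_zero by (intro mult_left_mono mult_strict_left_mono; simp)+
  hence "pi * of_int \<lfloor>x / pi\<rfloor> \<le> x" "x < pi * of_int \<lfloor>x / pi\<rfloor> + pi"
    by (simp_all add: algebra_simps)
  thus ?thesis unfolding pmod_def by simp
qed

lemma pmod_id: "0 \<le> x \<Longrightarrow> x < pi \<Longrightarrow> pmod x = x"
proof -
  assume "0 \<le> x" "x < pi"
  hence "0 \<le> x / pi" "x / pi < 1" by (simp_all add: field_simps)
  hence "\<lfloor>x / pi\<rfloor> = 0" by linarith
  thus ?thesis by (simp add: pmod_def)
qed

lemma dirv_int_shift: "\<exists>s. (s = 1 \<or> s = -1) \<and> dirv (x - of_int k * pi) = s *\<^sub>R dirv x"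
proof -
  have s0: "sin (of_int k * pi) = 0" using sin_zero_iff_int2 by blast
  hence "(cos (of_int k * pi))^2 = 1" using sin_cos_squared_add[of "of_int k * pi"] by simp
  hence c: "cos (of_int k * pi) = 1 \<or> cos (of_int k * pi) = -1"
    by (metis power2_eq_1_iff)
  show ?thesis
    by (rule exI[of _ "cos (of_int k * pi)"]) (use c s0 in \<open>auto simp: vec2_eq cos_diff sin_diff\<close>)
qed

lemma dirv_pmod: "\<exists>s. (s = 1 \<or> s = -1) \<and> dirv (pmod x) = s *\<^sub>R dirv x"
  unfolding pmod_def using dirv_int_shift[of x "\<lfloor>x / pi\<rfloor>"] by (simp add: mult.commute)

lemma pangle_dirv: "pangle (dirv x) = pmod x"
proof -
  obtain s where s: "s = 1 \<or> s = -1" "dirv (pmod x) = s *\<^sub>R dirv x" using dirv_pmod by blast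
  have "dirv x = s *\<^sub>R dirv (pmod x)" using s by auto
  thus ?thesis using pmod_range s by (intro pangle_eqI[of _ s]) auto
qed



lemma circ_istop: "istopology (\<lambda>S. S \<subseteq> {0..<pi} \<and> open {x. pmod x \<in> S})"
proof -
  have i: "open {x. pmod x \<in> S \<inter> T}" if "open {x. pmod x \<in> S}" "open {x. pmod x \<in> T}" for S T
  proof -
    have "{x. pmod x \<in> S \<inter> T} = {x. pmod x \<in> S} \<inter> {x. pmod x \<in> T}" by auto
    thus ?thesis using that by auto
  qed
  have u: "open {x. pmod x \<in> \<Union>KK}" if "\<forall>K\<in>KK. open {x. pmod x \<in> K}" for KK
  proof -
    have "{x. pmod x \<in> \<Union>KK} = (\<Union>K\<in>KK. {x. pmod x \<in> K})" by auto
    thus ?thesis using that by auto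
  qed
  show ?thesis unfolding istopology_def using i u by blast
qed

lemma openin_circ: "openin circ_top S \<longleftrightarrow> S \<subseteq> {0..<pi} \<and> open {x. pmod x \<in> S}"
  unfolding circ_top_def using circ_istop by simp

lemma topspace_circ: "topspace circ_top = {0..<pi}"
proof -
  have "{x. pmod x \<in> {0..<pi}} = UNIV" using pmod_range by auto
  hence "openin circ_top {0..<pi}" unfolding openin_circ by simp
  hence "{0..<pi} \<subseteq> topspace circ_top" by (simp add: openin_subset)
  moreover have "topspace circ_top \<subseteq> {0..<pi}"
    using openin_circ openin_topspace by blast
  ultimately show ?thesis by blast
qed

lemma closure_circ_sub: "circ_top closure_of U \<subseteq> {0..<pi}"
  using closure_of_subset_topspace topspace_circ by metis

lemma closure_circ_sup: "U \<subseteq> {0..<pi} \<Longrightarrow> U \<subseteq> circ_top closure_of U"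
  using closure_of_subset topspace_circ by metis

lemma closed_pre_closure: "closed {x. pmod x \<in> circ_top closure_of U}"
proof -
  define K where "K = circ_top closure_of U"
  have "closedin circ_top K" unfolding K_def by simp
  hence "openin circ_top ({0..<pi} - K)" by (simp add: closedin_def topspace_circ)
  hence "open {x. pmod x \<in> {0..<pi} - K}" unfolding openin_circ by blast
  moreover have "{x. pmod x \<in> {0..<pi} - K} = - {x. pmod x \<in> K}" using pmod_range by auto
  ultimately show ?thesis unfolding K_def[symmetric] by (simp add: closed_def)
qed

lemma pmod_shift: "pmod (x + of_int k * pi) = pmod x"
proof -
  have "(x + of_int k * pi) / pi = x / pi + of_int k" by (simp add: field_simps)
  hence "\<lfloor>(x + of_int k * pi) / pi\<rfloor> = \<lfloor>x / pi\<rfloor> + k" by simp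
  thus ?thesis unfolding pmod_def by (simp add: algebra_simps)
qed

lemma d2_zero_dir:
  assumes "d2 v (dirv y) = 0" "v \<noteq> 0"
  shows "pangle v = pmod y"
proof -
  define t where "t = pangle v"
  from pangle_prop[OF assms(2)] obtain r where r: "0 \<le> t" "t < pi" "r \<noteq> 0" "v = r *\<^sub>R dirv t"
    unfolding t_def[symmetric] by blast
  have "r * sin (y - t) = 0" using assms(1) r(4) by (simp add: d2_dirv)
  hence "sin (y - t) = 0" using r(3) by simp
  then obtain i::int where "y - t = of_int i * pi" using sin_zero_iff_int2 by blast
  hence "y = t + of_int i * pi" by simp
  hence "pmod y = pmod t" using pmod_shift by simp
  also have "\<dots> = t" using r pmod_id by simp
  finally show ?thesis by (simp add: t_def)
qed

lemma mv_ne0: assumes "det (M::real^2^2) = 1" "v \<noteq> 0" shows "M *v v \<noteq> 0"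
proof
  assume "M *v v = 0"
  hence "d2 (M *v v) (M *v (\<chi> i. if i = 1 then - v$2 else v$1)) = 0" by (simp add: d2_def)
  hence "d2 v (\<chi> i. if i = 1 then - v$2 else v$1) = 0" using assms(1) d2_mult by simp
  hence "(v$1)^2 + (v$2)^2 = 0" by (simp add: d2_def power2_eq_square)
  hence "v$1 = 0" "v$2 = 0" by (simp_all add: sum_power2_eq_zero_iff)
  thus False using assms(2) by (simp add: vec2_eq)
qed

lemma pangle_Mdirv_pmod: assumes "det (M::real^2^2) = 1"
  shows "pangle (M *v dirv (pmod x)) = pangle (M *v dirv x)"
proof -
  obtain s where s: "s = 1 \<or> s = -1" "dirv (pmod x) = s *\<^sub>R dirv x" using dirv_pmod by blast
  have "M *v dirv (pmod x) = s *\<^sub>R (M *v dirv x)" using s(2) by (simp add: matrix_vector_mult_scaleR)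
  thus ?thesis using s(1) pangle_scale[OF mv_ne0[OF assms dirv_ne0[of x]], of s] by auto
qed

lemma phiA_pmod: "det M = 1 \<Longrightarrow> phiA M (pmod x) = phiA M x"
  unfolding phiA_def by (rule pangle_Mdirv_pmod)

lemma mnorm_bound: "norm (M *v v) \<le> mnorm M * norm v"
  unfolding mnorm_def by (rule onorm) simp

lemma mnorm_nonneg: "0 \<le> mnorm (M::real^2^2)"
  unfolding mnorm_def by (rule onorm_pos_le) simp

lemma mnorm_mult: "mnorm ((M::real^2^2) ** N) \<le> mnorm M * mnorm N"
proof -
  have "(\<lambda>x. (M ** N) *v x) = (\<lambda>x. M *v x) \<circ> (\<lambda>x. N *v x)"
    by (auto simp: matrix_vector_mul_assoc)
  thus ?thesis unfolding mnorm_def using onorm_compose[of "(\<lambda>x. M *v x)" "(\<lambda>x. N *v x)"] by simp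
qed

lemma mnorm_le: "(\<And>v. norm ((M::real^2^2) *v v) \<le> b * norm v) \<Longrightarrow> mnorm M \<le> b"
  unfolding mnorm_def by (rule onorm_le)

lemma mnorm_id: "mnorm (mat 1 :: real^2^2) \<le> 1"
  by (rule mnorm_le) simp

lemma mnorm_ge_dirv: "norm ((M::real^2^2) *v dirv t) \<le> mnorm M"
  using mnorm_bound[of M "dirv t"] by simp

lemma two_dir_decomp:
  assumes "d2 p q \<noteq> 0"
  shows "(v::real^2) = (d2 v q / d2 p q) *\<^sub>R p + (d2 p v / d2 p q) *\<^sub>R q"
proof -
  have e: "d2 p q *\<^sub>R v = d2 v q *\<^sub>R p + d2 p v *\<^sub>R q"
    by (simp add: vec2_eq d2_def algebra_simps)
  have "v = (1 / d2 p q) *\<^sub>R (d2 p q *\<^sub>R v)" using assms by simp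
  also have "\<dots> = (d2 v q / d2 p q) *\<^sub>R p + (d2 p v / d2 p q) *\<^sub>R q"
    unfolding e by (simp add: scaleR_add_right)
  finally show ?thesis .
qed

lemma mnorm_two_dir:
  assumes "sin (b - a) \<noteq> 0"
  shows "mnorm (M::real^2^2) \<le> (norm (M *v dirv a) + norm (M *v dirv b)) / \<bar>sin (b - a)\<bar>"
proof (rule mnorm_le)
  fix v :: "real^2"
  define s where "s = sin (b - a)"
  have s: "d2 (dirv a) (dirv b) = s" by (simp add: d2_dirv s_def)
  have v: "v = (d2 v (dirv b) / s) *\<^sub>R dirv a + (d2 (dirv a) v / s) *\<^sub>R dirv b"
    using two_dir_decomp[of "dirv a" "dirv b" v] assms s by (simp add: s_def)
  have "M *v v = (d2 v (dirv b) / s) *\<^sub>R (M *v dirv a) + (d2 (dirv a) v / s) *\<^sub>R (M *v dirv b)"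
    by (subst v) (simp add: matrix_vector_right_distrib matrix_vector_mult_scaleR)
  hence "norm (M *v v) \<le> \<bar>d2 v (dirv b) / s\<bar> * norm (M *v dirv a) + \<bar>d2 (dirv a) v / s\<bar> * norm (M *v dirv b)"
    by (metis norm_scaleR norm_triangle_ineq)
  also have "\<dots> \<le> (norm v / \<bar>s\<bar>) * norm (M *v dirv a) + (norm v / \<bar>s\<bar>) * norm (M *v dirv b)"
  proof -
    have "\<bar>d2 v (dirv b)\<bar> \<le> norm v" using d2_le[of v "dirv b"] by simp
    moreover have "\<bar>d2 (dirv a) v\<bar> \<le> norm v" using d2_le[of "dirv a" v] by simp
    ultimately show ?thesis
      by (intro add_mono mult_right_mono) (auto simp: abs_divide divide_right_mono)
  qed
  also have "\<dots> = (norm (M *v dirv a) + norm (M *v dirv b)) / \<bar>sin (b - a)\<bar> * norm v"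
    by (simp add: s_def add_divide_distrib algebra_simps)
  finally show "norm (M *v v) \<le> (norm (M *v dirv a) + norm (M *v dirv b)) / \<bar>sin (b - a)\<bar> * norm v" .
qed

definition inv2 :: "real^2^2 \<Rightarrow> real^2^2" where
  "inv2 M = (\<chi> i j. if i = 1 \<and> j = 1 then M$2$2 else if i = 1 then - M$1$2
      else if j = 1 then - M$2$1 else M$1$1)"

lemma inv2_11[simp]: "inv2 M $1$1 = M$2$2" and inv2_12[simp]: "inv2 M $1$2 = - M$1$2"
  and inv2_21[simp]: "inv2 M $2$1 = - M$2$1" and inv2_22[simp]: "inv2 M $2$2 = M$1$1"
  by (simp_all add: inv2_def)

lemma inv2_right: "det M = 1 \<Longrightarrow> M *v (inv2 M *v v) = v"
  by (simp add: vec2_eq det_2 algebra_simps)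

lemma inv2_left: "det M = 1 \<Longrightarrow> inv2 M *v (M *v v) = v"
  by (simp add: vec2_eq det_2 algebra_simps)

lemma matmul_11: "((A::real^2^2) ** B) $1$1 = A$1$1 * B$1$1 + A$1$2 * B$2$1"
  and matmul_12: "((A::real^2^2) ** B) $1$2 = A$1$1 * B$1$2 + A$1$2 * B$2$2"
  and matmul_21: "((A::real^2^2) ** B) $2$1 = A$2$1 * B$1$1 + A$2$2 * B$2$1"
  and matmul_22: "((A::real^2^2) ** B) $2$2 = A$2$1 * B$1$2 + A$2$2 * B$2$2"
  by (simp_all add: matrix_matrix_mult_def sum_2)

lemma inv2_mult: "inv2 ((A::real^2^2) ** B) = inv2 B ** inv2 A"
  by (simp add: vec_eq_iff forall_2 matmul_11 matmul_12 matmul_21 matmul_22 algebra_simps)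

lemma det_mult2: "det ((A::real^2^2) ** B) = det A * det B"
  by (rule det_mul)


lemma pwrap_small: "\<bar>t\<bar> < pi/2 \<Longrightarrow> pwrap t = t"
proof -
  assume a: "\<bar>t\<bar> < pi/2"
  have "\<bar>t / pi - of_int 0\<bar> < 1/2" using a pi_gt_zero by (simp add: abs_divide field_simps)
  hence "round (t / pi) = 0" by (rule round_unique')
  thus ?thesis by (simp add: pwrap_def)
qed

lemma pwrap_range: "\<bar>pwrap t\<bar> \<le> pi/2"
proof -
  have "\<bar>of_int (round (t/pi)) - t/pi\<bar> \<le> 1/2" by (rule of_int_round_abs_le)
  hence "pi * \<bar>of_int (round (t/pi)) - t/pi\<bar> \<le> pi * (1/2)" using pi_gt_zero by (intro mult_left_mono) auto
  moreover have "pi * \<bar>of_int (round (t/pi)) - t/pi\<bar> = \<bar>pwrap t\<bar>"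
  proof -
    have "\<bar>pwrap t\<bar> = \<bar>pi * (t/pi - of_int (round (t/pi)))\<bar>"
      unfolding pwrap_def by (simp add: right_diff_distrib)
    also have "\<dots> = pi * \<bar>of_int (round (t/pi)) - t/pi\<bar>" using pi_gt_zero
      by (simp add: abs_mult abs_minus_commute)
    finally show ?thesis by simp
  qed
  ultimately show ?thesis by simp
qed

lemma cderiv_unique:
  assumes "((\<lambda>h. pwrap (f (x + h) - f x) / h) \<longlongrightarrow> D) (at 0)"
  shows "cderiv f x = D"
  unfolding cderiv_def
  using assms tendsto_unique[OF trivial_limit_at] by (intro the_equality) auto

lemma cderiv_id: "cderiv id x = 1"
proof (rule cderiv_unique)
  have "eventually (\<lambda>h::real. \<bar>h\<bar> < pi/2 \<and> h \<noteq> 0) (at 0)"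
    using pi_gt_zero by (auto simp: eventually_at intro!: exI[of _ "pi/2"])
  hence "eventually (\<lambda>h. 1 = pwrap (id (x + h) - id x) / h) (at 0)"
    by eventually_elim (simp add: pwrap_small)
  thus "((\<lambda>h. pwrap (id (x + h) - id x) / h) \<longlongrightarrow> 1) (at 0)"
    by (rule Lim_transform_eventually[rotated]) simp
qed

definition ip :: "real^2 \<Rightarrow> real^2 \<Rightarrow> real" where "ip u v = u$1 * v$1 + u$2 * v$2"

lemma ip_scale[simp]: "ip (r *\<^sub>R u) (s *\<^sub>R v) = r * s * ip u v"
  by (simp add: ip_def algebra_simps)

lemma ip_dirv: "ip (dirv a) (dirv b) = cos (a - b)"
  by (simp add: ip_def cos_diff)

lemma norm_sq: "(norm (v::real^2))^2 = ip v v"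
  by (simp add: norm2 ip_def power2_eq_square)

lemma norm_scale_dirv: "norm (r *\<^sub>R dirv t) = \<bar>r\<bar>" by simp

lemma pwrap_angle_formula:
  fixes M :: "real^2^2"
  assumes det: "det M = 1" and pos: "ip (M *v dirv (x + h)) (M *v dirv x) > 0"
  shows "pwrap (pangle (M *v dirv (x + h)) - pangle (M *v dirv x))
       = arcsin (sin h * (1 / (norm (M *v dirv x) * norm (M *v dirv (x + h)))))"
proof -
  define u1 where "u1 = M *v dirv (x + h)"
  define u0 where "u0 = M *v dirv x"
  define a where "a = pangle u1"
  define b where "b = pangle u0"
  have u1n: "u1 \<noteq> 0" and u0n: "u0 \<noteq> 0" unfolding u1_def u0_def using mv_ne0[OF det] by auto
  obtain r1 where r1: "r1 \<noteq> 0" "u1 = r1 *\<^sub>R dirv a" using pangle_prop[OF u1n] a_def by blast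
  obtain r0 where r0: "r0 \<noteq> 0" "u0 = r0 *\<^sub>R dirv b" using pangle_prop[OF u0n] b_def by blast
  define t where "t = a - b"
  define k where "k = round (t / pi)"
  define d where "d = pwrap t"
  have dk: "d = t - of_int k * pi" unfolding d_def k_def pwrap_def by simp
  obtain \<sigma> where \<sigma>: "\<sigma> = 1 \<or> \<sigma> = -1" "dirv (t - of_int k * pi) = \<sigma> *\<^sub>R dirv t"
    using dirv_int_shift by blast
  have cd: "cos d = \<sigma> * cos t" and sd: "sin d = \<sigma> * sin t"
    using arg_cong[OF \<sigma>(2), of "\<lambda>v. v$1"] arg_cong[OF \<sigma>(2), of "\<lambda>v. v$2"] dk by auto
  have ipu: "ip u1 u0 = r1 * r0 * cos t" unfolding r1 r0 t_def by (simp add: ip_dirv)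
  have d2u: "d2 u0 u1 = r0 * r1 * sin t" unfolding r1 r0 t_def by (simp add: d2_dirv)
  have d2u': "d2 u0 u1 = sin h" unfolding u0_def u1_def using det by (simp add: d2_mult d2_dirv)
  have drange: "\<bar>d\<bar> \<le> pi/2" unfolding d_def by (rule pwrap_range)
  hence cdnn: "cos d \<ge> 0" by (intro cos_ge_zero) auto
  define \<rho> where "\<rho> = \<sigma> / (r0 * r1)"
  have cd2: "cos d = \<rho> * ip u1 u0" unfolding cd ipu \<rho>_def using r0 r1 by (simp add: field_simps)
  have sd2: "sin d = \<rho> * sin h" unfolding sd d2u'[symmetric] d2u \<rho>_def using r0 r1 by (simp add: field_simps)
  have ipos: "ip u1 u0 > 0" using pos unfolding u1_def u0_def .
  have rnn: "\<rho> \<ge> 0"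
  proof (rule ccontr)
    assume "\<not> \<rho> \<ge> 0" hence "\<rho> * ip u1 u0 < 0" using ipos by (simp add: mult_neg_pos)
    thus False using cd2 cdnn by simp
  qed
  have rabs: "\<bar>\<rho>\<bar> = 1 / (norm u0 * norm u1)"
    unfolding \<rho>_def r0(2) r1(2) using \<sigma>(1) by (auto simp: abs_mult)
  hence rho: "\<rho> = 1 / (norm u0 * norm u1)" using rnn by simp
  have "d = arcsin (sin d)" using drange by (intro arcsin_sin[symmetric]) auto
  also have "\<dots> = arcsin (sin h * (1 / (norm u0 * norm u1)))" unfolding sd2 rho by (simp add: mult.commute)
  finally show ?thesis unfolding d_def t_def a_def b_def u0_def u1_def .
qed

lemma norm_Mdirv: "norm ((M::real^2^2) *v dirv y) = sqrt ((M$1$1 * cos y + M$1$2 * sin y)^2 + (M$2$1 * cos y + M$2$2 * sin y)^2)"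
  by (simp add: norm2)

lemma ip_Mdirv: "ip ((M::real^2^2) *v dirv y) (M *v dirv z) = (M$1$1 * cos y + M$1$2 * sin y) * (M$1$1 * cos z + M$1$2 * sin z) + (M$2$1 * cos y + M$2$2 * sin y) * (M$2$1 * cos z + M$2$2 * sin z)"
  by (simp add: ip_def)

lemma cderiv_phi:
  fixes M :: "real^2^2"
  assumes det: "det M = 1"
  shows "cderiv (\<lambda>y. pangle (M *v dirv y)) x = 1 / (norm (M *v dirv x))^2"
proof (rule cderiv_unique)
  define N where "N = (\<lambda>y. norm (M *v dirv y))"
  have Npos: "N y > 0" for y unfolding N_def using mv_ne0[OF det dirv_ne0] by simp
  define \<rho> where "\<rho> = (\<lambda>h. 1 / (N x * N (x + h)))"
  define w where "w = (\<lambda>h. sin h * \<rho> h)"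
  have contN: "isCont (\<lambda>h. N (x + h)) 0"
    unfolding N_def norm_Mdirv by (intro continuous_intros)
  have cont\<rho>: "isCont \<rho> 0"
    unfolding \<rho>_def using Npos[of x] Npos[of "x + 0"] by (intro continuous_intros contN) auto
  have sinlim: "((\<lambda>h::real. (sin h - sin 0) / (h - 0)) \<longlongrightarrow> cos 0) (at 0)"
    using DERIV_sin[of "0::real"] unfolding has_field_derivative_iff by simp
  have "((\<lambda>h. (sin h - sin 0) / (h - 0) * \<rho> h) \<longlongrightarrow> cos 0 * \<rho> 0) (at 0)"
    by (intro tendsto_mult sinlim) (use cont\<rho> isCont_def in blast)
  hence "((\<lambda>h. (w h - w 0) / (h - 0)) \<longlongrightarrow> \<rho> 0) (at 0)"
    unfolding w_def by simp
  hence wd: "(w has_field_derivative \<rho> 0) (at 0)" unfolding has_field_derivative_iff .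
  have w0: "w 0 = 0" unfolding w_def by simp
  have ad: "DERIV arcsin (w 0) :> 1" using DERIV_arcsin[of 0] w0 by simp
  have gd: "DERIV (\<lambda>h. arcsin (w h)) 0 :> 1 * \<rho> 0" by (rule DERIV_chain2[OF ad wd])
  hence glim: "((\<lambda>h. (arcsin (w (0 + h)) - arcsin (w 0)) / h) \<longlongrightarrow> \<rho> 0) (at 0)"
    unfolding DERIV_def by simp
  have rho0: "\<rho> 0 = 1 / (norm (M *v dirv x))^2" unfolding \<rho>_def N_def by (simp add: power2_eq_square)
  define I where "I = (\<lambda>h. ip (M *v dirv (x + h)) (M *v dirv x))"
  have contI: "isCont I 0" unfolding I_def ip_Mdirv by (intro continuous_intros)
  have I0: "I 0 = (N x)^2" unfolding I_def N_def norm_sq by simp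
  hence "I 0 > 0" using Npos[of x] by simp
  hence ev: "eventually (\<lambda>h. I h > 0) (at 0)"
    using order_tendstoD(1)[OF contI[unfolded isCont_def]] by simp
  have "eventually (\<lambda>h. (arcsin (w (0 + h)) - arcsin (w 0)) / h =
      pwrap (pangle (M *v dirv (x + h)) - pangle (M *v dirv x)) / h) (at 0)"
    using ev
  proof eventually_elim
    case (elim h)
    have "pwrap (pangle (M *v dirv (x + h)) - pangle (M *v dirv x)) = arcsin (w h)"
      using pwrap_angle_formula[OF det, of x h] elim unfolding I_def w_def \<rho>_def N_def by simp
    thus ?case using w0 by simp
  qed
  from Lim_transform_eventually[OF glim this]
  show "((\<lambda>h. pwrap (pangle (M *v dirv (x + h)) - pangle (M *v dirv x)) / h) \<longlongrightarrow> 1 / (norm (M *v dirv x))\<^sup>2) (at 0)"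
    unfolding rho0 .
qed


lemma matw_Nil[simp]: "matw A [] = mat 1" and matw_Cons[simp]: "matw A (i # is) = A i ** matw A is"
  by (simp_all add: matw_def)

lemma matw_append: "matw A (is @ js) = matw A is ** matw A js"
  by (induction "is") (simp_all add: matrix_mul_assoc)

lemma phiw_Nil[simp]: "phiw A [] = id" and phiw_Cons[simp]: "phiw A (i # is) = phiA (A i) \<circ> phiw A is"
  by (simp_all add: phiw_def)

lemma det_matw: "set is \<subseteq> \<Lambda> \<Longrightarrow> \<forall>i\<in>\<Lambda>. det (A i) = 1 \<Longrightarrow> det (matw A is) = 1"
  by (induction "is") (auto simp: det_mul)

lemma phiw_eq:
  assumes "set is \<subseteq> \<Lambda>" "\<forall>i\<in>\<Lambda>. det (A i) = 1" "is \<noteq> []"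
  shows "phiw A is = (\<lambda>y. pangle (matw A is *v dirv y))"
  using assms
proof (induction "is")
  case Nil thus ?case by simp
next
  case (Cons i js)
  have di: "det (A i) = 1" using Cons.prems by auto
  show ?case
  proof (cases "js = []")
    case True thus ?thesis by (simp add: phiA_def fun_eq_iff)
  next
    case False
    have IH: "phiw A js = (\<lambda>y. pangle (matw A js *v dirv y))" using Cons False by auto
    have dj: "det (matw A js) = 1" using Cons.prems det_matw[of js \<Lambda> A] by auto
    show ?thesis
    proof (rule ext)
      fix y
      define v where "v = matw A js *v dirv y"
      define t where "t = pangle v"
      have vn: "v \<noteq> 0" unfolding v_def using mv_ne0[OF dj] by simp
      obtain r where r: "r \<noteq> 0" "v = r *\<^sub>R dirv t" using pangle_prop[OF vn] t_def by blast
      have "A i *v v = r *\<^sub>R (A i *v dirv t)" unfolding r(2) by (simp add: matrix_vector_mult_scaleR)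
      hence "A i *v dirv t = (1/r) *\<^sub>R (A i *v v)" using r(1) by simp
      hence "pangle (A i *v dirv t) = pangle (A i *v v)"
        using pangle_scale[OF mv_ne0[OF di vn], of "1/r"] r(1) by simp
      hence "pangle (A i *v dirv (pangle v)) = pangle (A i *v v)" unfolding t_def .
      thus "phiw A (i # js) y = pangle (matw A (i # js) *v dirv y)"
        by (simp add: IH phiA_def v_def matrix_vector_mul_assoc)
    qed
  qed
qed

lemma cderiv_phiw:
  assumes "set is \<subseteq> \<Lambda>" "\<forall>i\<in>\<Lambda>. det (A i) = 1"
  shows "cderiv (phiw A is) x = 1 / (norm (matw A is *v dirv x))^2"
proof (cases "is = []")
  case True thus ?thesis by (simp add: cderiv_id)
next
  case False
  thus ?thesis using phiw_eq[OF assms False] cderiv_phi[OF det_matw[OF assms]] by simp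
qed

lemma sin_shift_nz: assumes "0 < e" "e < pi" shows "sin (e - of_int m * pi) \<noteq> 0"
proof
  assume "sin (e - of_int m * pi) = 0"
  then obtain i::int where "e - of_int m * pi = of_int i * pi" using sin_zero_iff_int2 by blast
  hence "e = of_int (i + m) * pi" by (simp add: algebra_simps)
  hence "0 < of_int (i + m) * pi" "of_int (i + m) * pi < 1 * pi" using assms by auto
  hence "0 < (of_int (i + m)::real)" "(of_int (i + m)::real) < 1"
    using pi_gt_zero by (simp_all add: zero_less_mult_iff mult_less_cancel_right_pos)
  hence "0 < i + m" "i + m < 1" by simp_all
  thus False by linarith
qed

locale sys =
  fixes A :: "'i \<Rightarrow> real^2^2" and \<Lambda> :: "'i set" and U :: "real set"
  assumes fin: "finite \<Lambda>" and ne: "\<Lambda> \<noteq> {}"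
    and SL2: "\<forall>i\<in>\<Lambda>. det (A i) = 1"
    and mc: "multicone U"
    and inv: "strictly_invariant (\<lambda>i. phiA (A i)) \<Lambda> U"
begin

definition K where "K = circ_top closure_of U"

lemma U_props: "U \<subseteq> {0..<pi}" "U \<noteq> {}" "open {x. pmod x \<in> U}" "\<exists>w. 0 \<le> w \<and> w < pi \<and> w \<notin> U"
  using mc unfolding multicone_def openin_circ by auto

lemma K_sub: "K \<subseteq> {0..<pi}" unfolding K_def by (rule closure_circ_sub)
lemma U_K: "U \<subseteq> K" unfolding K_def using closure_circ_sup U_props(1) by blast

lemma inv': "i \<in> \<Lambda> \<Longrightarrow> x \<in> K \<Longrightarrow> phiA (A i) x \<in> U"
  using inv unfolding strictly_invariant_def K_def by blast

lemma detA: "i \<in> \<Lambda> \<Longrightarrow> det (A i) = 1" using SL2 by blast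

lemma detM: "set is \<subseteq> \<Lambda> \<Longrightarrow> det (matw A is) = 1" using det_matw SL2 by blast

lemma two_points: "\<exists>p q. p \<in> K \<and> q \<in> K \<and> sin (q - p) \<noteq> 0"
proof -
  obtain u0 where u0: "u0 \<in> U" using U_props(2) by blast
  have u0r: "0 \<le> u0" "u0 < pi" using u0 U_props(1) by auto
  have "u0 \<in> {x. pmod x \<in> U}" using u0 pmod_id[OF u0r] by simp
  then obtain \<epsilon> where \<epsilon>: "\<epsilon> > 0" "ball u0 \<epsilon> \<subseteq> {x. pmod x \<in> U}"
    using U_props(3) open_contains_ball by blast
  define e where "e = min (\<epsilon>/2) (pi/2)"
  have e: "0 < e" "e < pi" "e < \<epsilon>" using \<epsilon> pi_gt_zero unfolding e_def by (auto simp: min_less_iff_disj)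
  have "u0 + e \<in> ball u0 \<epsilon>" using e by (simp add: dist_real_def)
  hence q: "pmod (u0 + e) \<in> U" using \<epsilon> by auto
  have "sin (pmod (u0 + e) - u0) = sin (e - of_int \<lfloor>(u0 + e) / pi\<rfloor> * pi)"
    unfolding pmod_def by (simp add: algebra_simps)
  hence "sin (pmod (u0 + e) - u0) \<noteq> 0" using sin_shift_nz[OF e(1,2)] by simp
  thus ?thesis using q u0 U_K by blast
qed

lemma dir_in_K:
  assumes "set is \<subseteq> \<Lambda>" "x \<in> K"
  shows "\<exists>r x'. r \<noteq> 0 \<and> x' \<in> K \<and> matw A is *v dirv x = r *\<^sub>R dirv x'"
  using assms(1)
proof (induction "is")
  case Nil thus ?case using assms(2) by (intro exI[of _ 1] exI[of _ x]) auto
next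
  case (Cons i js)
  then obtain r x' where rx: "r \<noteq> 0" "x' \<in> K" "matw A js *v dirv x = r *\<^sub>R dirv x'" by auto
  have i: "i \<in> \<Lambda>" using Cons.prems by auto
  have vn: "A i *v dirv x' \<noteq> 0" using mv_ne0[OF detA[OF i]] by simp
  define p where "p = pangle (A i *v dirv x')"
  obtain s where s: "s \<noteq> 0" "A i *v dirv x' = s *\<^sub>R dirv p"
    using pangle_prop[OF vn] p_def by blast
  have "p \<in> K" using inv'[OF i rx(2)] U_K unfolding phiA_def p_def by blast
  moreover have "matw A (i # js) *v dirv x = (r * s) *\<^sub>R dirv p"
  proof -
    have "matw A (i # js) *v dirv x = A i *v (r *\<^sub>R dirv x')"
      using rx(3) by (simp add: matrix_vector_mul_assoc[symmetric])
    also have "\<dots> = r *\<^sub>R (s *\<^sub>R dirv p)" unfolding matrix_vector_mult_scaleR s(2) ..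
    finally show ?thesis by simp
  qed
  ultimately show ?case using rx(1) s(1) by (intro exI[of _ "r * s"] exI) auto
qed

end


lemma inv2_id: "inv2 (mat 1) *v (v::real^2) = v"
  by (simp add: vec2_eq mat_def)

context sys begin

lemma delta_single:
  assumes det: "det (B::real^2^2) = 1" and BU: "\<forall>x\<in>K. phiA B x \<in> U"
  shows "\<exists>\<delta>>0. \<forall>x\<in>K. \<forall>y. 0 \<le> y \<and> y < pi \<and> y \<notin> U \<longrightarrow> \<delta> * norm (B *v dirv x) \<le> \<bar>d2 (B *v dirv x) (dirv y)\<bar>"
proof -
  define Kt where "Kt = {0..pi} \<inter> {x. pmod x \<in> K}"
  define Dt where "Dt = {0..pi} \<inter> - {x. pmod x \<in> U}"
  have cK: "compact Kt" unfolding Kt_def K_def by (intro compact_Int_closed compact_Icc closed_pre_closure)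
  have cD: "compact Dt" unfolding Dt_def using U_props(3) by (intro compact_Int_closed compact_Icc) auto
  obtain x0 where x0: "x0 \<in> U" using U_props(2) by blast
  have x0r: "0 \<le> x0" "x0 < pi" using x0 U_props(1) by auto
  have "x0 \<in> Kt" unfolding Kt_def using x0 x0r pmod_id[OF x0r] U_K by auto
  moreover obtain w where w: "0 \<le> w" "w < pi" "w \<notin> U" using U_props(4) by blast
  moreover have "w \<in> Dt" unfolding Dt_def using w pmod_id[of w] by auto
  ultimately have Sne: "Kt \<times> Dt \<noteq> {}" by blast
  have cS: "compact (Kt \<times> Dt)" using cK cD by (rule compact_Times)
  define P where "P = (\<lambda>x. B$1$1 * cos x + B$1$2 * sin x)"
  define R where "R = (\<lambda>x. B$2$1 * cos x + B$2$2 * sin x)"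
  define F where "F = (\<lambda>p. \<bar>P (fst p) * sin (snd p) - R (fst p) * cos (snd p)\<bar> / sqrt ((P (fst p))^2 + (R (fst p))^2))"
  have Fe: "F (x, y) = \<bar>d2 (B *v dirv x) (dirv y)\<bar> / norm (B *v dirv x)" for x y
    unfolding F_def P_def R_def by (simp add: d2_def norm_Mdirv)
  have npos: "norm (B *v dirv x) > 0" for x using mv_ne0[OF det dirv_ne0] by simp
  have sq: "sqrt ((P x)^2 + (R x)^2) \<noteq> 0" for x
    using npos[of x] unfolding P_def R_def norm_Mdirv by (metis less_irrefl real_sqrt_zero)
  have contF: "continuous_on (Kt \<times> Dt) F"
    unfolding F_def P_def R_def using sq[unfolded P_def R_def]
    by (intro continuous_intros) auto
  obtain p0 where p0: "p0 \<in> Kt \<times> Dt" "\<forall>p\<in>Kt \<times> Dt. F p0 \<le> F p"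
    using continuous_attains_inf[OF cS Sne contF] by blast
  have Fpos: "F p > 0" if "p \<in> Kt \<times> Dt" for p
  proof -
    obtain x y where p: "p = (x, y)" by (cases p)
    have x: "pmod x \<in> K" and y: "pmod y \<notin> U" using that p unfolding Kt_def Dt_def by auto
    have "d2 (B *v dirv x) (dirv y) \<noteq> 0"
    proof
      assume "d2 (B *v dirv x) (dirv y) = 0"
      hence "pangle (B *v dirv x) = pmod y" using d2_zero_dir mv_ne0[OF det dirv_ne0] by blast
      moreover have "pangle (B *v dirv x) \<in> U"
        using BU x phiA_pmod[OF det, of x] unfolding phiA_def by metis
      ultimately show False using y by simp
    qed
    thus ?thesis unfolding p Fe using npos[of x] by simp
  qed
  define \<delta> where "\<delta> = F p0"
  have dpos: "\<delta> > 0" unfolding \<delta>_def using Fpos p0(1) by blast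
  show ?thesis
  proof (intro exI[of _ \<delta>] conjI dpos ballI allI impI)
    fix x y assume xK: "x \<in> K" and yy: "0 \<le> y \<and> y < pi \<and> y \<notin> U"
    have xr: "0 \<le> x" "x < pi" using xK K_sub by auto
    have "(x, y) \<in> Kt \<times> Dt" unfolding Kt_def Dt_def using xr yy xK pmod_id[OF xr] pmod_id[of y] by auto
    hence "\<delta> \<le> F (x, y)" using p0 unfolding \<delta>_def by blast
    thus "\<delta> * norm (B *v dirv x) \<le> \<bar>d2 (B *v dirv x) (dirv y)\<bar>"
      unfolding Fe using npos[of x] by (simp add: field_simps)
  qed
qed

lemma delta1_ex:
  "\<exists>\<delta>>0. \<forall>i\<in>\<Lambda>. \<forall>x\<in>K. \<forall>y. 0 \<le> y \<and> y < pi \<and> y \<notin> U \<longrightarrow> \<delta> * norm (A i *v dirv x) \<le> \<bar>d2 (A i *v dirv x) (dirv y)\<bar>"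
proof -
  have "\<forall>i\<in>\<Lambda>. \<exists>\<delta>>0. \<forall>x\<in>K. \<forall>y. 0 \<le> y \<and> y < pi \<and> y \<notin> U \<longrightarrow> \<delta> * norm (A i *v dirv x) \<le> \<bar>d2 (A i *v dirv x) (dirv y)\<bar>"
    using delta_single detA inv' by blast
  then obtain f where f: "\<forall>i\<in>\<Lambda>. f i > 0 \<and> (\<forall>x\<in>K. \<forall>y. 0 \<le> y \<and> y < pi \<and> y \<notin> U \<longrightarrow> f i * norm (A i *v dirv x) \<le> \<bar>d2 (A i *v dirv x) (dirv y)\<bar>)"
    by metis
  define \<delta> where "\<delta> = Min (f ` \<Lambda>)"
  have "\<delta> \<in> f ` \<Lambda>" unfolding \<delta>_def using fin ne by simp
  hence dpos: "\<delta> > 0" using f by auto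
  have dle: "\<delta> \<le> f i" if "i \<in> \<Lambda>" for i unfolding \<delta>_def using fin that by simp
  show ?thesis
  proof (intro exI[of _ \<delta>] conjI dpos ballI allI impI)
    fix i x y assume i: "i \<in> \<Lambda>" and x: "x \<in> K" and y: "0 \<le> y \<and> y < pi \<and> y \<notin> U"
    have "\<delta> * norm (A i *v dirv x) \<le> f i * norm (A i *v dirv x)" using dle[OF i] by (simp add: mult_right_mono)
    also have "\<dots> \<le> \<bar>d2 (A i *v dirv x) (dirv y)\<bar>" using f i x y by blast
    finally show "\<delta> * norm (A i *v dirv x) \<le> \<bar>d2 (A i *v dirv x) (dirv y)\<bar>" .
  qed
qed

end

context sys begin

definition d1 where "d1 = (SOME \<delta>. \<delta> > 0 \<and> (\<forall>i\<in>\<Lambda>. \<forall>x\<in>K. \<forall>y. 0 \<le> y \<and> y < pi \<and> y \<notin> U \<longrightarrow> \<delta> * norm (A i *v dirv x) \<le> \<bar>d2 (A i *v dirv x) (dirv y)\<bar>))"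

lemma d1: "d1 > 0" "\<And>i x y. i \<in> \<Lambda> \<Longrightarrow> x \<in> K \<Longrightarrow> 0 \<le> y \<Longrightarrow> y < pi \<Longrightarrow> y \<notin> U \<Longrightarrow> d1 * norm (A i *v dirv x) \<le> \<bar>d2 (A i *v dirv x) (dirv y)\<bar>"
proof -
  have "d1 > 0 \<and> (\<forall>i\<in>\<Lambda>. \<forall>x\<in>K. \<forall>y. 0 \<le> y \<and> y < pi \<and> y \<notin> U \<longrightarrow> d1 * norm (A i *v dirv x) \<le> \<bar>d2 (A i *v dirv x) (dirv y)\<bar>)"
    unfolding d1_def using delta1_ex by (rule someI_ex)
  thus "d1 > 0" "\<And>i x y. i \<in> \<Lambda> \<Longrightarrow> x \<in> K \<Longrightarrow> 0 \<le> y \<Longrightarrow> y < pi \<Longrightarrow> y \<notin> U \<Longrightarrow> d1 * norm (A i *v dirv x) \<le> \<bar>d2 (A i *v dirv x) (dirv y)\<bar>"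
    by auto
qed

definition Bi where "Bi = 1 + (\<Sum>i\<in>\<Lambda>. mnorm (inv2 (A i)))"

lemma Bi: "Bi \<ge> 1" "\<And>i. i \<in> \<Lambda> \<Longrightarrow> mnorm (inv2 (A i)) \<le> Bi"
proof -
  have s: "(\<Sum>i\<in>\<Lambda>. mnorm (inv2 (A i))) \<ge> 0" by (intro sum_nonneg mnorm_nonneg)
  thus "Bi \<ge> 1" unfolding Bi_def by simp
  fix i assume "i \<in> \<Lambda>"
  hence "mnorm (inv2 (A i)) \<le> (\<Sum>i\<in>\<Lambda>. mnorm (inv2 (A i)))"
    using fin by (intro member_le_sum mnorm_nonneg) auto
  thus "mnorm (inv2 (A i)) \<le> Bi" unfolding Bi_def by simp
qed

definition dd where "dd = d1 / Bi^2"

lemma dd_pos: "dd > 0" unfolding dd_def using d1(1) Bi(1) by simp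

lemma inv_step:
  assumes i: "i \<in> \<Lambda>" and en: "\<eta> \<noteq> 0" and eU: "pangle \<eta> \<notin> U"
  shows "inv2 (A i) *v \<eta> \<noteq> 0 \<and> pangle (inv2 (A i) *v \<eta>) \<notin> U \<and>
         (\<forall>x\<in>K. dd * norm (inv2 (A i) *v \<eta>) \<le> \<bar>d2 (dirv x) (inv2 (A i) *v \<eta>)\<bar>)"
proof -
  define \<zeta> where "\<zeta> = inv2 (A i) *v \<eta>"
  have det: "det (A i) = 1" using detA[OF i] .
  have Az: "A i *v \<zeta> = \<eta>" unfolding \<zeta>_def using inv2_right[OF det] .
  have zn: "\<zeta> \<noteq> 0" using Az en by auto
  define \<theta> where "\<theta> = pangle \<eta>"
  obtain r where r: "r \<noteq> 0" "\<eta> = r *\<^sub>R dirv \<theta>" and th: "0 \<le> \<theta>" "\<theta> < pi"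
    using pangle_prop[OF en] \<theta>_def by blast
  have thU: "\<theta> \<notin> U" using eU \<theta>_def by simp
  have nz: "norm \<zeta> \<le> Bi * \<bar>r\<bar>"
  proof -
    have "norm \<zeta> \<le> mnorm (inv2 (A i)) * norm \<eta>" unfolding \<zeta>_def by (rule mnorm_bound)
    also have "\<dots> \<le> Bi * norm \<eta>" using Bi(2)[OF i] by (simp add: mult_right_mono)
    finally show ?thesis using r(2) by simp
  qed
  have bound: "dd * norm \<zeta> \<le> \<bar>d2 (dirv x) \<zeta>\<bar>" if x: "x \<in> K" for x
  proof -
    have e1: "d2 (dirv x) \<zeta> = d2 (A i *v dirv x) \<eta>"
      using d2_mult[of "A i" "dirv x" \<zeta>] det Az by simp
    have e2: "\<bar>d2 (A i *v dirv x) \<eta>\<bar> = \<bar>r\<bar> * \<bar>d2 (A i *v dirv x) (dirv \<theta>)\<bar>"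
      unfolding r(2) by (simp add: abs_mult)
    have e3: "d1 * norm (A i *v dirv x) \<le> \<bar>d2 (A i *v dirv x) (dirv \<theta>)\<bar>"
      using d1(2)[OF i x th thU] .
    have e4: "1 \<le> Bi * norm (A i *v dirv x)"
    proof -
      have "1 = norm (inv2 (A i) *v (A i *v dirv x))" using inv2_left[OF det] by simp
      also have "\<dots> \<le> mnorm (inv2 (A i)) * norm (A i *v dirv x)" by (rule mnorm_bound)
      also have "\<dots> \<le> Bi * norm (A i *v dirv x)" using Bi(2)[OF i] by (simp add: mult_right_mono)
      finally show ?thesis .
    qed
    have Bp: "Bi > 0" using Bi(1) by simp
    have "dd * norm \<zeta> \<le> dd * (Bi * \<bar>r\<bar>)" using nz dd_pos by (simp add: mult_left_mono)
    also have "\<dots> = d1 * \<bar>r\<bar> / Bi" unfolding dd_def using Bp by (simp add: power2_eq_square field_simps)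
    also have "\<dots> \<le> d1 * \<bar>r\<bar> * norm (A i *v dirv x)"
    proof -
      have "d1 * \<bar>r\<bar> / Bi = d1 * \<bar>r\<bar> * (1 / Bi)" by simp
      also have "\<dots> \<le> d1 * \<bar>r\<bar> * norm (A i *v dirv x)"
        using e4 Bp d1(1) by (intro mult_left_mono) (auto simp: field_simps)
      finally show ?thesis .
    qed
    also have "\<dots> \<le> \<bar>r\<bar> * \<bar>d2 (A i *v dirv x) (dirv \<theta>)\<bar>"
      using e3 by (simp add: mult.assoc mult.left_commute mult_left_mono)
    finally show ?thesis using e1 e2 by simp
  qed
  have zU: "pangle \<zeta> \<notin> U"
  proof
    assume zU: "pangle \<zeta> \<in> U"
    obtain r' where r': "r' \<noteq> 0" "\<zeta> = r' *\<^sub>R dirv (pangle \<zeta>)" using pangle_prop[OF zn] by blast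
    have "d2 (dirv (pangle \<zeta>)) \<zeta> = 0" by (subst r'(2)) (simp add: d2_def)
    hence "dd * norm \<zeta> \<le> 0" using bound[of "pangle \<zeta>"] zU U_K by auto
    thus False using dd_pos zn by (simp add: mult_le_0_iff)
  qed
  show ?thesis using zn zU bound unfolding \<zeta>_def by blast
qed

lemma inv_iter:
  assumes "set js \<subseteq> \<Lambda>" "\<eta> \<noteq> 0" "pangle \<eta> \<notin> U"
  shows "inv2 (matw A js) *v \<eta> \<noteq> 0 \<and> pangle (inv2 (matw A js) *v \<eta>) \<notin> U \<and>
    (js \<noteq> [] \<longrightarrow> (\<forall>x\<in>K. dd * norm (inv2 (matw A js) *v \<eta>) \<le> \<bar>d2 (dirv x) (inv2 (matw A js) *v \<eta>)\<bar>))"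
  using assms
proof (induction js arbitrary: \<eta>)
  case Nil thus ?case by (simp add: inv2_id)
next
  case (Cons j js)
  have j: "j \<in> \<Lambda>" using Cons.prems by auto
  define \<eta>' where "\<eta>' = inv2 (A j) *v \<eta>"
  have st: "\<eta>' \<noteq> 0 \<and> pangle \<eta>' \<notin> U \<and> (\<forall>x\<in>K. dd * norm \<eta>' \<le> \<bar>d2 (dirv x) \<eta>'\<bar>)"
    unfolding \<eta>'_def using inv_step[OF j Cons.prems(2,3)] .
  have eq: "inv2 (matw A (j # js)) *v \<eta> = inv2 (matw A js) *v \<eta>'"
    unfolding \<eta>'_def by (simp add: inv2_mult matrix_vector_mul_assoc)
  have IH: "inv2 (matw A js) *v \<eta>' \<noteq> 0 \<and> pangle (inv2 (matw A js) *v \<eta>') \<notin> U \<and>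
    (js \<noteq> [] \<longrightarrow> (\<forall>x\<in>K. dd * norm (inv2 (matw A js) *v \<eta>') \<le> \<bar>d2 (dirv x) (inv2 (matw A js) *v \<eta>')\<bar>))"
    using Cons.IH Cons.prems(1) st by auto
  show ?case
  proof (cases "js = []")
    case True thus ?thesis using st eq by (simp add: inv2_id)
  next
    case False thus ?thesis using IH eq by simp
  qed
qed

lemma cone_nonempty:
  assumes "set is \<subseteq> \<Lambda>" "is \<noteq> []"
  shows "\<exists>z>0. \<forall>x\<in>K. dd * z \<le> norm (matw A is *v dirv x) \<and> norm (matw A is *v dirv x) \<le> z / d1"
proof -
  obtain w where w: "0 \<le> w" "w < pi" "w \<notin> U" using U_props(4) by blast
  define M where "M = matw A is"
  have det: "det M = 1" unfolding M_def using detM[OF assms(1)] .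
  define \<zeta> where "\<zeta> = inv2 M *v dirv w"
  have pw: "pangle (dirv w) = w" using pangle_dirv_id w by simp
  have it: "\<zeta> \<noteq> 0" "\<forall>x\<in>K. dd * norm \<zeta> \<le> \<bar>d2 (dirv x) \<zeta>\<bar>"
    using inv_iter[OF assms(1) dirv_ne0, of w] pw w assms(2) unfolding \<zeta>_def M_def by auto
  have Mz: "M *v \<zeta> = dirv w" unfolding \<zeta>_def using inv2_right[OF det] .
  obtain i js where ijs: "is = i # js" using assms(2) by (cases "is") auto
  have i: "i \<in> \<Lambda>" and js: "set js \<subseteq> \<Lambda>" using assms(1) ijs by auto
  show ?thesis
  proof (intro exI[of _ "norm \<zeta>"] conjI ballI)
    show "norm \<zeta> > 0" using it(1) by simp
    fix x assume x: "x \<in> K"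
    have e: "d2 (dirv x) \<zeta> = d2 (M *v dirv x) (dirv w)"
      using d2_mult[of M "dirv x" \<zeta>] det Mz by simp
    have "dd * norm \<zeta> \<le> \<bar>d2 (M *v dirv x) (dirv w)\<bar>" using it(2)[rule_format, OF x] unfolding e .
    also have "\<dots> \<le> norm (M *v dirv x) * norm (dirv w)" by (rule d2_le)
    finally show "dd * norm \<zeta> \<le> norm (matw A is *v dirv x)" unfolding M_def by simp
    obtain r x' where rx: "r \<noteq> 0" "x' \<in> K" "matw A js *v dirv x = r *\<^sub>R dirv x'"
      using dir_in_K[OF js x] by blast
    have Mx: "M *v dirv x = r *\<^sub>R (A i *v dirv x')"
      unfolding M_def ijs using rx(3) by (simp add: matrix_vector_mul_assoc[symmetric] matrix_vector_mult_scaleR)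
    have "d1 * norm (M *v dirv x) = \<bar>r\<bar> * (d1 * norm (A i *v dirv x'))" unfolding Mx by simp
    also have "\<dots> \<le> \<bar>r\<bar> * \<bar>d2 (A i *v dirv x') (dirv w)\<bar>"
      using d1(2)[OF i rx(2) w] by (simp add: mult_left_mono)
    also have "\<dots> = \<bar>d2 (M *v dirv x) (dirv w)\<bar>" unfolding Mx by (simp add: abs_mult)
    also have "\<dots> = \<bar>d2 (dirv x) \<zeta>\<bar>" using e by simp
    also have "\<dots> \<le> norm (dirv x) * norm \<zeta>" by (rule d2_le)
    finally have "d1 * norm (M *v dirv x) \<le> norm \<zeta>" by simp
    thus "norm (matw A is *v dirv x) \<le> norm \<zeta> / d1" unfolding M_def using d1(1) by (simp add: field_simps)
  qed
qed

lemma kappa_ex: "\<exists>\<kappa>>0. \<kappa> \<le> 1 \<and> (\<forall>is. set is \<subseteq> \<Lambda> \<longrightarrow> (\<forall>x\<in>K. \<kappa> * mnorm (matw A is) \<le> norm (matw A is *v dirv x)))"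
proof -
  obtain p q where pq: "p \<in> K" "q \<in> K" "sin (q - p) \<noteq> 0" using two_points by blast
  define s0 where "s0 = \<bar>sin (q - p)\<bar>"
  have s0: "s0 > 0" "s0 \<le> 1" unfolding s0_def using pq(3) by auto
  define \<kappa> where "\<kappa> = min 1 (dd * d1 * s0 / 2)"
  have kp: "\<kappa> > 0" "\<kappa> \<le> 1" unfolding \<kappa>_def using dd_pos d1(1) s0 by auto
  show ?thesis
  proof (intro exI[of _ \<kappa>] conjI kp allI impI ballI)
    fix "is" x assume isL: "set is \<subseteq> \<Lambda>" and x: "x \<in> K"
    show "\<kappa> * mnorm (matw A is) \<le> norm (matw A is *v dirv x)"
    proof (cases "is = []")
      case True
      have "\<kappa> * mnorm (mat 1 :: real^2^2) \<le> 1 * 1" using kp mnorm_id mnorm_nonneg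
        by (intro mult_mono) auto
      thus ?thesis using True by simp
    next
      case False
      define M where "M = matw A is"
      obtain z where z: "z > 0" "\<forall>x\<in>K. dd * z \<le> norm (M *v dirv x) \<and> norm (M *v dirv x) \<le> z / d1"
        using cone_nonempty[OF isL False] unfolding M_def by blast
      have "mnorm M \<le> (norm (M *v dirv p) + norm (M *v dirv q)) / s0"
        unfolding s0_def by (rule mnorm_two_dir[OF pq(3)])
      also have "\<dots> \<le> (z / d1 + z / d1) / s0" using z(2) pq(1,2) s0(1)
        by (intro divide_right_mono add_mono) auto
      finally have mM: "mnorm M \<le> 2 * z / (d1 * s0)" by (simp add: field_simps)
      have "\<kappa> * mnorm M \<le> (dd * d1 * s0 / 2) * mnorm M"
        unfolding \<kappa>_def using mnorm_nonneg[of M] by (intro mult_right_mono) auto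
      also have "\<dots> \<le> (dd * d1 * s0 / 2) * (2 * z / (d1 * s0))"
        using mM dd_pos d1(1) s0(1) by (intro mult_left_mono) auto
      also have "\<dots> = dd * z" using d1(1) s0(1) by (simp add: field_simps)
      also have "\<dots> \<le> norm (M *v dirv x)" using z(2) x by blast
      finally show ?thesis unfolding M_def .
    qed
  qed
qed

end

lemma words_fin: "finite \<Lambda> \<Longrightarrow> finite (words \<Lambda> n)"
  unfolding words_def by (rule finite_lists_length_eq)

lemma words_ne: "\<Lambda> \<noteq> {} \<Longrightarrow> words \<Lambda> n \<noteq> {}"
proof -
  assume "\<Lambda> \<noteq> {}" then obtain i where "i \<in> \<Lambda>" by blast
  hence "replicate n i \<in> words \<Lambda> n" unfolding words_def by auto
  thus ?thesis by blast
qed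

lemma words_card: "finite \<Lambda> \<Longrightarrow> card (words \<Lambda> n) = card \<Lambda> ^ n"
  unfolding words_def by (rule card_lists_length_eq)

lemma sum_words_add:
  "sum g (words \<Lambda> (n + m)) = (\<Sum>is\<in>words \<Lambda> n. \<Sum>js\<in>words \<Lambda> m. g (is @ js))"
proof -
  have inj: "inj_on (\<lambda>(a, b). a @ b) (words \<Lambda> n \<times> words \<Lambda> m)"
    unfolding words_def by (auto simp: inj_on_def)
  have im: "(\<lambda>(a, b). a @ b) ` (words \<Lambda> n \<times> words \<Lambda> m) = words \<Lambda> (n + m)"
  proof (intro equalityI subsetI)
    fix xs assume "xs \<in> (\<lambda>(a, b). a @ b) ` (words \<Lambda> n \<times> words \<Lambda> m)"
    thus "xs \<in> words \<Lambda> (n + m)" unfolding words_def by auto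
  next
    fix xs assume xs: "xs \<in> words \<Lambda> (n + m)"
    have "(take n xs, drop n xs) \<in> words \<Lambda> n \<times> words \<Lambda> m" using xs unfolding words_def
      by (auto dest: in_set_takeD in_set_dropD)
    moreover have "xs = (\<lambda>(a, b). a @ b) (take n xs, drop n xs)" by simp
    ultimately show "xs \<in> (\<lambda>(a, b). a @ b) ` (words \<Lambda> n \<times> words \<Lambda> m)" by blast
  qed
  have "sum g (words \<Lambda> (n + m)) = sum (g \<circ> (\<lambda>(a, b). a @ b)) (words \<Lambda> n \<times> words \<Lambda> m)"
    using sum.reindex[OF inj, of g] im by simp
  also have "\<dots> = (\<Sum>(a, b)\<in>words \<Lambda> n \<times> words \<Lambda> m. g (a @ b))"
    by (rule sum.cong) auto
  also have "\<dots> = (\<Sum>is\<in>words \<Lambda> n. \<Sum>js\<in>words \<Lambda> m. g (is @ js))"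
    by (rule sum.cartesian_product[symmetric])
  finally show ?thesis .
qed

lemma powr_sandwich:
  fixes k x y s :: real
  assumes "0 < k" "k \<le> 1" "0 < y" "k * y \<le> x" "x \<le> y"
  shows "k powr \<bar>s\<bar> * y powr s \<le> x powr s \<and> x powr s \<le> (1/k) powr \<bar>s\<bar> * y powr s"
proof -
  have xp: "x > 0" using assms by (smt (verit) mult_pos_pos)
  have ky: "(k * y) powr s = k powr s * y powr s" using assms by (simp add: powr_mult)
  show ?thesis
  proof (cases "s \<ge> 0")
    case True
    have "k powr s * y powr s \<le> x powr s" using ky assms xp True
      by (metis powr_mono2 less_imp_le mult_pos_pos)
    moreover have "x powr s \<le> y powr s" using assms xp True by (intro powr_mono2) auto
    moreover have "y powr s \<le> (1/k) powr s * y powr s"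
    proof -
      have "1 \<le> (1/k) powr s" using assms True by (intro ge_one_powr_ge_zero) auto
      thus ?thesis using powr_ge_zero[of y s] by (metis mult_le_cancel_right1 powr_gt_zero assms(3) order.strict_iff_not mult_1)
    qed
    ultimately show ?thesis using True by simp
  next
    case False
    have "x powr s \<le> (k * y) powr s" using assms xp False by (intro powr_mono2') auto
    also have "\<dots> = (1/k) powr \<bar>s\<bar> * y powr s" using ky False assms
      by (simp add: powr_divide powr_minus_divide[symmetric] powr_minus)
    finally have 1: "x powr s \<le> (1/k) powr \<bar>s\<bar> * y powr s" .
    have "y powr s \<le> x powr s" using assms xp False by (intro powr_mono2') auto
    moreover have "k powr \<bar>s\<bar> * y powr s \<le> y powr s"
    proof -
      have "k powr \<bar>s\<bar> \<le> 1" using assms powr_mono2[of "\<bar>s\<bar>" k 1] by simp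
      thus ?thesis using powr_ge_zero[of y s] by (simp add: mult_left_le_one_le)
    qed
    ultimately show ?thesis using 1 by simp
  qed
qed

context sys begin

definition kap where "kap = (SOME \<kappa>. \<kappa> > 0 \<and> \<kappa> \<le> 1 \<and> (\<forall>is. set is \<subseteq> \<Lambda> \<longrightarrow> (\<forall>x\<in>K. \<kappa> * mnorm (matw A is) \<le> norm (matw A is *v dirv x))))"

lemma kap: "kap > 0" "kap \<le> 1" "\<And>is x. set is \<subseteq> \<Lambda> \<Longrightarrow> x \<in> K \<Longrightarrow> kap * mnorm (matw A is) \<le> norm (matw A is *v dirv x)"
proof -
  have "kap > 0 \<and> kap \<le> 1 \<and> (\<forall>is. set is \<subseteq> \<Lambda> \<longrightarrow> (\<forall>x\<in>K. kap * mnorm (matw A is) \<le> norm (matw A is *v dirv x)))"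
    unfolding kap_def using kappa_ex by (rule someI_ex)
  thus "kap > 0" "kap \<le> 1" "\<And>is x. set is \<subseteq> \<Lambda> \<Longrightarrow> x \<in> K \<Longrightarrow> kap * mnorm (matw A is) \<le> norm (matw A is *v dirv x)"
    by auto
qed

lemma K_ne: "K \<noteq> {}" using U_props(2) U_K by blast

lemma Npos: "set is \<subseteq> \<Lambda> \<Longrightarrow> norm (matw A is *v dirv x) > 0"
  using mv_ne0[OF detM dirv_ne0] by simp

lemma mpos: "set is \<subseteq> \<Lambda> \<Longrightarrow> mnorm (matw A is) > 0"
proof -
  assume a: "set is \<subseteq> \<Lambda>"
  obtain x where "x \<in> K" using K_ne by blast
  show ?thesis using Npos[OF a, of x] mnorm_ge_dirv[of "matw A is" x] by linarith
qed

lemma cd_abs: "set is \<subseteq> \<Lambda> \<Longrightarrow> \<bar>cderiv (phiw A is) x\<bar> = 1 / (norm (matw A is *v dirv x))^2"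
  using cderiv_phiw[of "is" \<Lambda> A x] SL2 by simp

lemma cd_bounds:
  assumes "set is \<subseteq> \<Lambda>" "x \<in> K"
  shows "1 / (mnorm (matw A is))^2 \<le> \<bar>cderiv (phiw A is) x\<bar> \<and> \<bar>cderiv (phiw A is) x\<bar> \<le> 1 / (kap^2 * (mnorm (matw A is))^2)"
proof -
  define m where "m = mnorm (matw A is)"
  define N where "N = norm (matw A is *v dirv x)"
  have N: "kap * m \<le> N" "N \<le> m" "N > 0" unfolding m_def N_def
    using kap(3)[OF assms] mnorm_ge_dirv Npos[OF assms(1)] by auto
  have km: "kap * m > 0" using kap(1) mpos[OF assms(1)] unfolding m_def by simp
  have "1 / m^2 \<le> 1 / N^2" using N by (intro divide_left_mono power_mono mult_pos_pos) auto
  moreover have "1 / N^2 \<le> 1 / (kap * m)^2" using N km by (intro divide_left_mono power_mono mult_pos_pos) auto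
  ultimately show ?thesis using cd_abs[OF assms(1), of x] unfolding m_def[symmetric] N_def[symmetric]
    by (simp add: power_mult_distrib)
qed

lemma dnorm_bounds:
  assumes "set is \<subseteq> \<Lambda>"
  shows "1 / (mnorm (matw A is))^2 \<le> dnorm U (phiw A is) \<and> dnorm U (phiw A is) \<le> 1 / (kap^2 * (mnorm (matw A is))^2)"
proof
  have d: "dnorm U (phiw A is) = (SUP x\<in>K. \<bar>cderiv (phiw A is) x\<bar>)" unfolding dnorm_def K_def ..
  show "dnorm U (phiw A is) \<le> 1 / (kap^2 * (mnorm (matw A is))^2)"
    unfolding d using cd_bounds[OF assms] K_ne by (intro cSUP_least) auto
  obtain x where x: "x \<in> K" using K_ne by blast
  have bdd: "bdd_above ((\<lambda>x. \<bar>cderiv (phiw A is) x\<bar>) ` K)"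
    using cd_bounds[OF assms] by (intro bdd_aboveI2) blast
  show "1 / (mnorm (matw A is))^2 \<le> dnorm U (phiw A is)"
    unfolding d using cd_bounds[OF assms x] by (intro cSUP_upper2[OF bdd x]) auto
qed

lemma quasi:
  assumes "set is \<subseteq> \<Lambda>" "set js \<subseteq> \<Lambda>"
  shows "kap^2 * (mnorm (matw A is) * mnorm (matw A js)) \<le> mnorm (matw A (is @ js)) \<and>
         mnorm (matw A (is @ js)) \<le> mnorm (matw A is) * mnorm (matw A js)"
proof
  show "mnorm (matw A (is @ js)) \<le> mnorm (matw A is) * mnorm (matw A js)"
    unfolding matw_append by (rule mnorm_mult)
  obtain x where x: "x \<in> K" using K_ne by blast
  obtain r x' where rx: "r \<noteq> 0" "x' \<in> K" "matw A js *v dirv x = r *\<^sub>R dirv x'"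
    using dir_in_K[OF assms(2) x] by blast
  have ar: "\<bar>r\<bar> = norm (matw A js *v dirv x)" using rx(3) by simp
  have e: "matw A (is @ js) *v dirv x = r *\<^sub>R (matw A is *v dirv x')"
    unfolding matw_append using rx(3) by (simp add: matrix_vector_mul_assoc[symmetric] matrix_vector_mult_scaleR)
  have "kap^2 * (mnorm (matw A is) * mnorm (matw A js)) = (kap * mnorm (matw A js)) * (kap * mnorm (matw A is))"
    by (simp add: power2_eq_square algebra_simps)
  also have "\<dots> \<le> \<bar>r\<bar> * norm (matw A is *v dirv x')"
    unfolding ar using kap(3)[OF assms(2) x] kap(3)[OF assms(1) rx(2)] kap(1) mnorm_nonneg
    by (intro mult_mono) auto
  also have "\<dots> = norm (matw A (is @ js) *v dirv x)" unfolding e by simp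
  also have "\<dots> \<le> mnorm (matw A (is @ js))" by (rule mnorm_ge_dirv)
  finally show "kap^2 * (mnorm (matw A is) * mnorm (matw A js)) \<le> mnorm (matw A (is @ js))" .
qed

end

lemma approx_mult:
  fixes a :: "nat \<Rightarrow> real"
  assumes add: "\<And>n m. n \<ge> 1 \<Longrightarrow> m \<ge> 1 \<Longrightarrow> \<bar>a (n + m) - a n - a m\<bar> \<le> Q"
  shows "m \<ge> 1 \<Longrightarrow> n \<ge> 1 \<Longrightarrow> \<bar>a (m * n) - real m * a n\<bar> \<le> (real m - 1) * Q"
proof (induction m)
  case 0 thus ?case by simp
next
  case (Suc m)
  show ?case
  proof (cases "m = 0")
    case True thus ?thesis by simp
  next
    case False
    hence m1: "m \<ge> 1" by simp
    have IH: "\<bar>a (m * n) - real m * a n\<bar> \<le> (real m - 1) * Q" using Suc m1 by simp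
    have mn: "m * n \<ge> 1" using m1 Suc.prems(2) by simp
    have "\<bar>a (m * n + n) - a (m * n) - a n\<bar> \<le> Q" using add[OF mn Suc.prems(2)] .
    moreover have "Suc m * n = m * n + n" by simp
    ultimately show ?thesis using IH by (simp add: algebra_simps)
  qed
qed

lemma approx_additive:
  fixes a :: "nat \<Rightarrow> real"
  assumes Q: "Q \<ge> 0" and add: "\<And>n m. n \<ge> 1 \<Longrightarrow> m \<ge> 1 \<Longrightarrow> \<bar>a (n + m) - a n - a m\<bar> \<le> Q"
  shows "\<exists>p. (\<lambda>n. a n / real n) \<longlonglongrightarrow> p \<and> (\<forall>n\<ge>1. \<bar>a n - real n * p\<bar> \<le> Q)"
proof -
  have L2a: "\<bar>a (m * n) / real (m * n) - a n / real n\<bar> \<le> Q / real n" if "m \<ge> 1" "n \<ge> 1" for m n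
  proof -
    have mp: "real m > 0" "real n > 0" using that by auto
    have "a (m * n) / real (m * n) - a n / real n = (a (m * n) - real m * a n) / (real m * real n)"
      using mp by (simp add: field_simps)
    hence "\<bar>a (m * n) / real (m * n) - a n / real n\<bar> = \<bar>a (m * n) - real m * a n\<bar> / (real m * real n)"
      using mp by (simp add: abs_divide)
    also have "\<dots> \<le> (real m - 1) * Q / (real m * real n)"
      using approx_mult[OF add that] mp by (intro divide_right_mono) auto
    also have "\<dots> \<le> real m * Q / (real m * real n)"
      using Q mp by (intro divide_right_mono mult_right_mono) auto
    also have "\<dots> = Q / real n" using mp by simp
    finally show ?thesis .
  qed
  have L2: "\<bar>a n / real n - a m / real m\<bar> \<le> Q / real n + Q / real m" if "m \<ge> 1" "n \<ge> 1" for m n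
  proof -
    have 1: "\<bar>a (m * n) / real (m * n) - a n / real n\<bar> \<le> Q / real n" using L2a that by blast
    have 2: "\<bar>a (m * n) / real (m * n) - a m / real m\<bar> \<le> Q / real m" using L2a[of n m] that
      by (simp add: mult.commute)
    show ?thesis using 1 2 unfolding abs_le_iff by linarith
  qed
  have "Cauchy (\<lambda>n. a n / real n)"
  proof (rule metric_CauchyI)
    fix e :: real assume e: "e > 0"
    obtain M0 :: nat where M0: "real M0 > 2 * Q / e" using reals_Archimedean2[of "2 * Q / e"] by blast
    define M where "M = M0 + 1"
    have M: "real M > 2 * Q / e" "M \<ge> 1" using M0 unfolding M_def by auto
    have "2 * Q / real M < e"
    proof (cases "Q = 0")
      case True thus ?thesis using e by simp
    next
      case False
      hence "Q > 0" using Q by simp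
      thus ?thesis using M e by (simp add: field_simps)
    qed
    show "\<exists>M. \<forall>m\<ge>M. \<forall>n\<ge>M. dist (a m / real m) (a n / real n) < e"
    proof (intro exI[of _ M] allI impI)
      fix m n assume mn: "m \<ge> M" "n \<ge> M"
      have "dist (a m / real m) (a n / real n) \<le> Q / real m + Q / real n"
        unfolding dist_real_def using L2[of n m] mn M(2) by simp
      also have "\<dots> \<le> Q / real M + Q / real M"
        using mn M(2) Q by (intro add_mono divide_left_mono) auto
      also have "\<dots> < e" using \<open>2 * Q / real M < e\<close> by simp
      finally show "dist (a m / real m) (a n / real n) < e" .
    qed
  qed
  then obtain p where p: "(\<lambda>n. a n / real n) \<longlonglongrightarrow> p"
    using Cauchy_convergent_iff convergent_def by blast
  have "\<bar>a n - real n * p\<bar> \<le> Q" if n: "n \<ge> 1" for n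
  proof -
    have "\<bar>a n / real n - p\<bar> \<le> Q / real n"
    proof (rule LIMSEQ_le)
      show "(\<lambda>m. \<bar>a n / real n - a m / real m\<bar>) \<longlonglongrightarrow> \<bar>a n / real n - p\<bar>"
        by (intro tendsto_intros p)
      show "(\<lambda>m. Q / real n + Q / real m) \<longlonglongrightarrow> Q / real n"
        using tendsto_add[OF tendsto_const lim_const_over_n[of Q]] by simp
      show "\<exists>N. \<forall>m\<ge>N. \<bar>a n / real n - a m / real m\<bar> \<le> Q / real n + Q / real m"
        using L2 n by (intro exI[of _ 1]) auto
    qed
    hence "real n * \<bar>a n / real n - p\<bar> \<le> real n * (Q / real n)" using n by (intro mult_left_mono) auto
    moreover have "real n * \<bar>a n / real n - p\<bar> = \<bar>a n - real n * p\<bar>"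
    proof -
      have "real n * \<bar>a n / real n - p\<bar> = \<bar>real n * (a n / real n - p)\<bar>" by (simp add: abs_mult)
      also have "real n * (a n / real n - p) = a n - real n * p" using n by (simp add: right_diff_distrib)
      finally show ?thesis .
    qed
    ultimately show ?thesis using n by simp
  qed
  thus ?thesis using p by blast
qed


locale sysg = sys +
  fixes c lam :: real
  assumes c_pos: "c > 0" and lam: "lam > 1"
    and growth: "\<forall>n. \<forall>is\<in>words \<Lambda> n. mnorm (matw A is) \<ge> c * lam ^ n"
begin

definition S where "S n t = (\<Sum>is\<in>words \<Lambda> n. mnorm (matw A is) powr (- t))"
definition qq where "qq t = (1 / kap^2) powr \<bar>t\<bar>"
definition Rb where "Rb = 1 + (\<Sum>i\<in>\<Lambda>. mnorm (A i))"

lemma wset: "is \<in> words \<Lambda> n \<Longrightarrow> set is \<subseteq> \<Lambda>" unfolding words_def by auto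
lemma wlen: "is \<in> words \<Lambda> n \<Longrightarrow> length is = n" unfolding words_def by auto

lemma mw_pos: "is \<in> words \<Lambda> n \<Longrightarrow> mnorm (matw A is) > 0" using mpos[OF wset] .

lemma mw_ne0: "is \<in> words \<Lambda> n \<Longrightarrow> mnorm (matw A is) \<noteq> 0" using mw_pos by (metis less_irrefl)

lemma S_pos: "S n t > 0"
proof -
  have "\<And>is. is \<in> words \<Lambda> n \<Longrightarrow> 0 < mnorm (matw A is) powr (-t)" using mw_ne0 by simp
  thus ?thesis unfolding S_def using words_fin[OF fin] words_ne[OF ne] by (intro sum_pos) auto
qed

lemma qq_ge1: "qq t \<ge> 1"
proof -
  have "1 \<le> 1 / kap^2" using kap(1,2) by (simp add: field_simps power_le_one)
  thus ?thesis unfolding qq_def by (intro ge_one_powr_ge_zero) auto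
qed

lemma kq: "(kap^2) powr \<bar>t\<bar> * qq t = 1"
  unfolding qq_def using kap(1) by (simp add: powr_mult[symmetric])

lemma S_mult: "S (n + m) t \<le> qq t * (S n t * S m t) \<and> S n t * S m t \<le> qq t * S (n + m) t"
proof -
  define f where "f = (\<lambda>is. mnorm (matw A is) powr (- t))"
  have k: "0 < kap^2" "kap^2 \<le> 1" using kap(1,2) by (auto simp: power_le_one)
  have bnd: "(kap^2) powr \<bar>t\<bar> * (f is * f js) \<le> f (is @ js) \<and> f (is @ js) \<le> qq t * (f is * f js)"
    if "is \<in> words \<Lambda> n" "js \<in> words \<Lambda> m" for "is" js
  proof -
    have s: "set is \<subseteq> \<Lambda>" "set js \<subseteq> \<Lambda>" using that wset by auto
    have y: "0 < mnorm (matw A is) * mnorm (matw A js)" using mpos s by simp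
    have sw: "(kap^2) powr \<bar>-t\<bar> * (mnorm (matw A is) * mnorm (matw A js)) powr (-t) \<le> mnorm (matw A (is @ js)) powr (-t) \<and>
      mnorm (matw A (is @ js)) powr (-t) \<le> (1 / kap^2) powr \<bar>-t\<bar> * (mnorm (matw A is) * mnorm (matw A js)) powr (-t)"
      using powr_sandwich[OF k y] quasi[OF s] by blast
    have pm: "(mnorm (matw A is) * mnorm (matw A js)) powr (-t) = f is * f js"
      unfolding f_def using mpos s by (simp add: powr_mult)
    show ?thesis using sw unfolding pm qq_def f_def by simp
  qed
  have Snm: "S (n + m) t = (\<Sum>is\<in>words \<Lambda> n. \<Sum>js\<in>words \<Lambda> m. f (is @ js))"
    unfolding S_def f_def by (rule sum_words_add)
  have prod: "S n t * S m t = (\<Sum>is\<in>words \<Lambda> n. \<Sum>js\<in>words \<Lambda> m. f is * f js)"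
    unfolding S_def f_def by (rule sum_product)
  have up: "S (n + m) t \<le> qq t * (S n t * S m t)"
    unfolding Snm prod sum_distrib_left using bnd by (intro sum_mono) auto
  have lo: "(kap^2) powr \<bar>t\<bar> * (S n t * S m t) \<le> S (n + m) t"
    unfolding Snm prod sum_distrib_left using bnd by (intro sum_mono) auto
  have "S n t * S m t = qq t * ((kap^2) powr \<bar>t\<bar> * (S n t * S m t))" using kq[of t] by (simp add: algebra_simps)
  also have "\<dots> \<le> qq t * S (n + m) t" using lo qq_ge1[of t] by (intro mult_left_mono) auto
  finally show ?thesis using up by simp
qed

lemma lnS_add: "\<bar>ln (S (n + m) t) - ln (S n t) - ln (S m t)\<bar> \<le> ln (qq t)"
proof -
  have q: "qq t > 0" using qq_ge1[of t] by simp
  have sp: "S n t > 0" "S m t > 0" "S (n + m) t > 0" using S_pos by auto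
  have "ln (S (n + m) t) \<le> ln (qq t * (S n t * S m t))" using S_mult[of n m t] sp q by simp
  hence 1: "ln (S (n + m) t) \<le> ln (qq t) + ln (S n t) + ln (S m t)" using sp q by (simp add: ln_mult)
  have "ln (S n t * S m t) \<le> ln (qq t * S (n + m) t)" using S_mult[of n m t] sp q by simp
  hence 2: "ln (S n t) + ln (S m t) \<le> ln (qq t) + ln (S (n + m) t)" using sp q by (simp add: ln_mult)
  show ?thesis using 1 2 by linarith
qed

definition P where "P t = lim (\<lambda>n. ln (S n t) / real n)"

lemma P: "(\<lambda>n. ln (S n t) / real n) \<longlonglongrightarrow> P t" "\<And>n. n \<ge> 1 \<Longrightarrow> \<bar>ln (S n t) - real n * P t\<bar> \<le> ln (qq t)"
proof -
  have "ln (qq t) \<ge> 0" using qq_ge1[of t] by simp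
  from approx_additive[OF this lnS_add]
  obtain p where p: "(\<lambda>n. ln (S n t) / real n) \<longlonglongrightarrow> p" "\<forall>n\<ge>1. \<bar>ln (S n t) - real n * p\<bar> \<le> ln (qq t)"
    by blast
  have "P t = p" unfolding P_def using p(1) by (rule limI)
  thus "(\<lambda>n. ln (S n t) / real n) \<longlonglongrightarrow> P t" "\<And>n. n \<ge> 1 \<Longrightarrow> \<bar>ln (S n t) - real n * P t\<bar> \<le> ln (qq t)"
    using p by auto
qed

lemma Rb_ge1: "Rb \<ge> 1" unfolding Rb_def using sum_nonneg[of \<Lambda> "\<lambda>i. mnorm (A i)"] mnorm_nonneg by auto

lemma mnorm_words_le: "is \<in> words \<Lambda> n \<Longrightarrow> mnorm (matw A is) \<le> Rb ^ n"
proof (induction "is" arbitrary: n)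
  case Nil thus ?case using mnorm_id wlen by fastforce
next
  case (Cons i js)
  have i: "i \<in> \<Lambda>" and js: "js \<in> words \<Lambda> (n - 1)" and n: "n = Suc (length js)"
    using Cons.prems unfolding words_def by auto
  have Ai: "mnorm (A i) \<le> Rb"
  proof -
    have "mnorm (A i) \<le> (\<Sum>i\<in>\<Lambda>. mnorm (A i))" using fin i by (intro member_le_sum mnorm_nonneg) auto
    thus ?thesis unfolding Rb_def by simp
  qed
  have "mnorm (matw A (i # js)) \<le> mnorm (A i) * mnorm (matw A js)" by (simp add: mnorm_mult)
  also have "\<dots> \<le> Rb * Rb ^ (n - 1)" using Ai Cons.IH[OF js] mnorm_nonneg Rb_ge1
    by (intro mult_mono) auto
  also have "\<dots> = Rb ^ n" using n by simp
  finally show ?case .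
qed


lemma S_dec: "t \<le> t' \<Longrightarrow> S n t' \<le> (c * lam ^ n) powr (-(t' - t)) * S n t"
  unfolding S_def sum_distrib_left
proof (intro sum_mono)
  fix "is" assume t: "t \<le> t'" and w: "is \<in> words \<Lambda> n"
  define m where "m = mnorm (matw A is)"
  have mp: "m > 0" unfolding m_def using mpos wset[OF w] .
  have g: "c * lam ^ n \<le> m" unfolding m_def using growth w by blast
  have cp: "c * lam ^ n > 0" using c_pos lam by simp
  have "m powr (-t') = m powr (-(t' - t)) * m powr (-t)" by (simp add: powr_add[symmetric])
  also have "\<dots> \<le> (c * lam ^ n) powr (-(t' - t)) * m powr (-t)"
    using t mp g cp by (intro mult_right_mono powr_mono2') auto
  finally show "mnorm (matw A is) powr (-t') \<le> (c * lam ^ n) powr (-(t' - t)) * mnorm (matw A is) powr (-t)"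
    unfolding m_def .
qed

lemma S_inc: "t \<le> t' \<Longrightarrow> (Rb ^ n) powr (-(t' - t)) * S n t \<le> S n t'"
  unfolding S_def sum_distrib_left
proof (intro sum_mono)
  fix "is" assume t: "t \<le> t'" and w: "is \<in> words \<Lambda> n"
  define m where "m = mnorm (matw A is)"
  have mp: "m > 0" unfolding m_def using mpos wset[OF w] .
  have g: "m \<le> Rb ^ n" unfolding m_def using mnorm_words_le[OF w] .
  have "(Rb ^ n) powr (-(t' - t)) * m powr (-t) \<le> m powr (-(t' - t)) * m powr (-t)"
    using t mp g by (intro mult_right_mono powr_mono2') auto
  also have "\<dots> = m powr (-t')" by (simp add: powr_add[symmetric])
  finally show "(Rb ^ n) powr (-(t' - t)) * mnorm (matw A is) powr (-t) \<le> mnorm (matw A is) powr (-t')"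
    unfolding m_def .
qed

lemma P_dec: assumes "t \<le> t'" shows "P t' \<le> P t - (t' - t) * ln lam"
proof (rule LIMSEQ_le)
  show "(\<lambda>n. ln (S n t') / real n) \<longlonglongrightarrow> P t'" by (rule P(1))
  show "(\<lambda>n. ln (S n t) / real n - (t' - t) * ln c / real n - (t' - t) * ln lam) \<longlonglongrightarrow> P t - (t' - t) * ln lam"
    using tendsto_diff[OF tendsto_diff[OF P(1)[of t] lim_const_over_n[of "(t' - t) * ln c"]] tendsto_const[of "(t' - t) * ln lam"]]
    by simp
  show "\<exists>N. \<forall>n\<ge>N. ln (S n t') / real n \<le> ln (S n t) / real n - (t' - t) * ln c / real n - (t' - t) * ln lam"
  proof (intro exI[of _ 1] allI impI)
    fix n :: nat assume n: "n \<ge> 1"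
    have cp: "c * lam ^ n > 0" using c_pos lam by simp
    have pos: "0 < (c * lam ^ n) powr (-(t' - t)) * S n t" using cp S_pos[of n t] by (metis mult_pos_pos powr_gt_zero less_irrefl)
    have "ln (S n t') \<le> ln ((c * lam ^ n) powr (-(t' - t)) * S n t)"
      using S_dec[OF assms, of n] S_pos[of n t'] pos by simp
    also have "\<dots> = -(t' - t) * (ln c + real n * ln lam) + ln (S n t)"
      using S_pos[of n t] cp c_pos lam by (simp add: ln_mult ln_powr ln_realpow)
    finally have "ln (S n t') \<le> ln (S n t) - (t' - t) * ln c - real n * ((t' - t) * ln lam)"
      by (simp add: algebra_simps)
    hence "ln (S n t') / real n \<le> (ln (S n t) - (t' - t) * ln c - real n * ((t' - t) * ln lam)) / real n"
      using n by (intro divide_right_mono) auto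
    also have "\<dots> = ln (S n t) / real n - (t' - t) * ln c / real n - (t' - t) * ln lam"
      using n by (simp add: diff_divide_distrib)
    finally show "ln (S n t') / real n \<le> ln (S n t) / real n - (t' - t) * ln c / real n - (t' - t) * ln lam" .
  qed
qed

lemma P_inc: assumes "t \<le> t'" shows "P t - (t' - t) * ln Rb \<le> P t'"
proof (rule LIMSEQ_le)
  show "(\<lambda>n. ln (S n t') / real n) \<longlonglongrightarrow> P t'" by (rule P(1))
  show "(\<lambda>n. ln (S n t) / real n - (t' - t) * ln Rb) \<longlonglongrightarrow> P t - (t' - t) * ln Rb"
    by (intro tendsto_intros P(1))
  show "\<exists>N. \<forall>n\<ge>N. ln (S n t) / real n - (t' - t) * ln Rb \<le> ln (S n t') / real n"
  proof (intro exI[of _ 1] allI impI)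
    fix n :: nat assume n: "n \<ge> 1"
    have rp: "Rb ^ n > 0" using Rb_ge1 by simp
    have pos: "0 < (Rb ^ n) powr (-(t' - t)) * S n t" using rp S_pos[of n t] by (metis mult_pos_pos powr_gt_zero less_irrefl)
    have "ln ((Rb ^ n) powr (-(t' - t)) * S n t) \<le> ln (S n t')"
      using S_inc[OF assms, of n] S_pos[of n t'] pos by simp
    moreover have "ln ((Rb ^ n) powr (-(t' - t)) * S n t) = ln (S n t) - real n * ((t' - t) * ln Rb)"
      using S_pos[of n t] rp Rb_ge1 by (simp add: ln_mult ln_powr ln_realpow algebra_simps)
    ultimately have "(ln (S n t) - real n * ((t' - t) * ln Rb)) / real n \<le> ln (S n t') / real n"
      using n by (intro divide_right_mono) auto
    moreover have "(ln (S n t) - real n * ((t' - t) * ln Rb)) / real n = ln (S n t) / real n - (t' - t) * ln Rb"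
      using n by (simp add: diff_divide_distrib)
    ultimately show "ln (S n t) / real n - (t' - t) * ln Rb \<le> ln (S n t') / real n" by simp
  qed
qed

lemma P0: "P 0 = ln (real (card \<Lambda>))"
proof -
  have "S n 0 = real (card \<Lambda>) ^ n" for n
  proof -
    have "S n 0 = (\<Sum>is\<in>words \<Lambda> n. 1)" unfolding S_def
      using mw_ne0 by (intro sum.cong) auto
    thus ?thesis using words_card[OF fin] by simp
  qed
  have cp: "real (card \<Lambda>) > 0" using fin ne by (simp add: card_gt_0_iff)
  have "eventually (\<lambda>n. ln (real (card \<Lambda>)) = ln (S n 0) / real n) sequentially"
    using eventually_ge_at_top[of 1]
  proof eventually_elim
    case (elim n) thus ?case using \<open>\<And>n. S n 0 = real (card \<Lambda>) ^ n\<close> cp by (simp add: ln_realpow)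
  qed
  hence "(\<lambda>n. ln (S n 0) / real n) \<longlonglongrightarrow> ln (real (card \<Lambda>))"
    by (rule Lim_transform_eventually[rotated]) simp
  thus ?thesis using P(1)[of 0] LIMSEQ_unique by blast
qed

end

context sysg begin

lemma lnlam: "ln lam > 0" using lam by simp
lemma lnRb: "ln Rb \<ge> 0" using Rb_ge1 by simp

lemma P_strict: "t < t' \<Longrightarrow> P t' < P t"
proof -
  assume "t < t'"
  hence "(t' - t) * ln lam > 0" using lnlam by simp
  thus ?thesis using P_dec[of t t'] \<open>t < t'\<close> by simp
qed

lemma P_lip: "\<bar>P a - P b\<bar> \<le> \<bar>a - b\<bar> * (ln Rb + ln lam)"
proof (cases "a \<le> b")
  case True
  have 1: "P b \<le> P a - (b - a) * ln lam" using P_dec[OF True] .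
  have 2: "P a - (b - a) * ln Rb \<le> P b" using P_inc[OF True] .
  have "(b - a) * ln lam \<ge> 0" using True lnlam by simp
  moreover have "(b - a) * ln Rb \<ge> 0" using True lnRb by simp
  ultimately show ?thesis using 1 2 True by (simp add: abs_le_iff algebra_simps)
next
  case False
  hence F: "b \<le> a" by simp
  have 1: "P a \<le> P b - (a - b) * ln lam" using P_dec[OF F] .
  have 2: "P b - (a - b) * ln Rb \<le> P a" using P_inc[OF F] .
  have "(a - b) * ln lam \<ge> 0" using F lnlam by simp
  moreover have "(a - b) * ln Rb \<ge> 0" using F lnRb by simp
  ultimately show ?thesis using 1 2 F by (simp add: abs_le_iff algebra_simps)
qed

lemma P_cont: "continuous_on S' P"
  unfolding continuous_on_iff
proof (intro ballI allI impI)
  fix x and e :: real assume e: "e > 0"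
  define L where "L = ln Rb + ln lam + 1"
  have L: "L > 0" unfolding L_def using lnRb lnlam by simp
  show "\<exists>d>0. \<forall>x'\<in>S'. dist x' x < d \<longrightarrow> dist (P x') (P x) < e"
  proof (intro exI[of _ "e / L"] conjI ballI impI)
    show "e / L > 0" using e L by simp
    fix x' assume "dist x' x < e / L"
    hence d: "\<bar>x' - x\<bar> < e / L" by (simp add: dist_real_def)
    have "\<bar>P x' - P x\<bar> \<le> \<bar>x' - x\<bar> * (ln Rb + ln lam)" by (rule P_lip)
    also have "\<dots> \<le> \<bar>x' - x\<bar> * L" unfolding L_def by (intro mult_left_mono) auto
    also have "\<dots> < e / L * L" using d L by (intro mult_strict_right_mono) auto
    also have "\<dots> = e" using L by simp
    finally show "dist (P x') (P x) < e" by (simp add: dist_real_def)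
  qed
qed

lemma tstar_ex: "\<exists>t. t \<ge> 0 \<and> P t = 0"
proof -
  have c1: "real (card \<Lambda>) \<ge> 1" using fin ne by (simp add: Suc_le_eq card_gt_0_iff)
  hence P0: "P 0 \<ge> 0" using P0 by simp
  define T where "T = P 0 / ln lam + 1"
  have T: "T \<ge> 0" unfolding T_def using P0 lnlam by simp
  have "P T \<le> P 0 - (T - 0) * ln lam" using P_dec[OF T] by simp
  also have "\<dots> = - ln lam" unfolding T_def using lnlam by (simp add: field_simps)
  finally have "P T \<le> 0" using lnlam by simp
  from IVT2'[of P T 0 0, OF this P0 T P_cont]
  show ?thesis by blast
qed

definition ts where "ts = (SOME t. t \<ge> 0 \<and> P t = 0)"

lemma ts: "ts \<ge> 0" "P ts = 0"
  using someI_ex[OF tstar_ex] unfolding ts_def by auto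

lemma P_zero_iff: "P t = 0 \<longleftrightarrow> t = ts"
proof
  assume "P t = 0"
  show "t = ts"
  proof (rule ccontr)
    assume "t \<noteq> ts"
    hence "t < ts \<or> ts < t" by linarith
    thus False using P_strict[of t ts] P_strict[of ts t] ts(2) \<open>P t = 0\<close> by auto
  qed
qed (use ts in simp)

lemma powr_m2: fixes m s :: real shows "m > 0 \<Longrightarrow> (1 / m^2) powr s = m powr (- (2 * s))"
proof -
  assume m: "m > 0"
  have "1 / m^2 = m powr (-2::real)" using m by (simp add: powr_minus divide_inverse)
  hence "(1 / m^2) powr s = (m powr (-2)) powr s" by simp
  also have "\<dots> = m powr (- (2 * s))" by (simp add: powr_powr)
  finally show ?thesis .
qed

lemma pressure_lim: "pressure_seq A \<Lambda> U s \<longlonglongrightarrow> P (2 * s)"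
proof -
  define k where "k = kap^2"
  have k: "0 < k" "k \<le> 1" unfolding k_def using kap(1,2) by (auto simp: power_le_one)
  define Sig where "Sig n = (\<Sum>is\<in>words \<Lambda> n. dnorm U (phiw A is) powr s)" for n
  define Q where "Q = \<bar>s\<bar> * ln (1 / k)"
  have bnds: "k powr \<bar>s\<bar> * Sig n \<le> S n (2 * s) \<and> S n (2 * s) \<le> (1/k) powr \<bar>s\<bar> * Sig n" for n
  proof -
    have w: "k powr \<bar>s\<bar> * dnorm U (phiw A is) powr s \<le> mnorm (matw A is) powr (- (2 * s)) \<and>
        mnorm (matw A is) powr (- (2 * s)) \<le> (1/k) powr \<bar>s\<bar> * dnorm U (phiw A is) powr s"
      if "is \<in> words \<Lambda> n" for "is"
    proof -
      have sI: "set is \<subseteq> \<Lambda>" using wset that .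
      define m where "m = mnorm (matw A is)"
      have mp: "m > 0" unfolding m_def using mpos[OF sI] .
      define y where "y = dnorm U (phiw A is)"
      have db: "1 / m^2 \<le> y" "y \<le> 1 / (kap^2 * m^2)" using dnorm_bounds[OF sI] unfolding m_def y_def by auto
      have yp: "y > 0" using db(1) mp by (smt (verit) divide_pos_pos zero_less_power)
      have "k * y \<le> k * (1 / (kap^2 * m^2))" using db(2) k by (intro mult_left_mono) auto
      also have "\<dots> = 1 / m^2" unfolding k_def using kap(1) by (simp add: field_simps)
      finally have ky: "k * y \<le> 1 / m^2" .
      have e: "(1 / m^2) powr s = m powr (- (2 * s))" by (rule powr_m2[OF mp])
      have "k powr \<bar>s\<bar> * y powr s \<le> m powr (- (2 * s)) \<and> m powr (- (2 * s)) \<le> (1/k) powr \<bar>s\<bar> * y powr s"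
        using powr_sandwich[OF k yp ky db(1), of s] unfolding e .
      thus ?thesis unfolding m_def y_def .
    qed
    have "k powr \<bar>s\<bar> * Sig n = (\<Sum>is\<in>words \<Lambda> n. k powr \<bar>s\<bar> * dnorm U (phiw A is) powr s)"
      unfolding Sig_def by (simp add: sum_distrib_left)
    also have "\<dots> \<le> S n (2 * s)" unfolding S_def using w by (intro sum_mono) auto
    finally have 1: "k powr \<bar>s\<bar> * Sig n \<le> S n (2 * s)" .
    have "S n (2 * s) \<le> (\<Sum>is\<in>words \<Lambda> n. (1/k) powr \<bar>s\<bar> * dnorm U (phiw A is) powr s)"
      unfolding S_def using w by (intro sum_mono) auto
    also have "\<dots> = (1/k) powr \<bar>s\<bar> * Sig n" unfolding Sig_def by (simp add: sum_distrib_left)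
    finally show ?thesis using 1 by simp
  qed
  have Sigp: "Sig n > 0" for n
  proof -
    have "(1/k) powr \<bar>s\<bar> * Sig n > 0" using bnds[of n] S_pos[of n "2 * s"] by linarith
    moreover have "(1/k) powr \<bar>s\<bar> > 0" using k by simp
    ultimately show ?thesis by (simp add: zero_less_mult_iff)
  qed
  have lnb: "\<bar>ln (Sig n) - ln (S n (2 * s))\<bar> \<le> Q" for n
  proof -
    have kp: "k powr \<bar>s\<bar> > 0" "(1/k) powr \<bar>s\<bar> > 0" using k by auto
    have "ln (k powr \<bar>s\<bar> * Sig n) \<le> ln (S n (2 * s))"
      using bnds[of n] kp Sigp[of n] S_pos[of n "2 * s"] by simp
    hence 1: "\<bar>s\<bar> * ln k + ln (Sig n) \<le> ln (S n (2 * s))"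
      using kp Sigp[of n] k by (simp add: ln_mult ln_powr)
    have "ln (S n (2 * s)) \<le> ln ((1/k) powr \<bar>s\<bar> * Sig n)"
      using bnds[of n] kp Sigp[of n] S_pos[of n "2 * s"] by simp
    hence 2: "ln (S n (2 * s)) \<le> \<bar>s\<bar> * ln (1/k) + ln (Sig n)"
      using kp Sigp[of n] k by (simp add: ln_mult ln_powr)
    have "ln (1/k) = - ln k" using k by (simp add: ln_div)
    thus ?thesis using 1 2 unfolding Q_def by (simp add: abs_le_iff)
  qed
  have ps: "pressure_seq A \<Lambda> U s n = ln (Sig n) / real n" for n
    unfolding pressure_seq_def Sig_def ..
  have "((\<lambda>n. ln (Sig n) / real n - ln (S n (2 * s)) / real n) \<longlonglongrightarrow> 0)"
  proof (rule Lim_null_comparison)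
    show "eventually (\<lambda>n. norm (ln (Sig n) / real n - ln (S n (2 * s)) / real n) \<le> Q / real n) sequentially"
      using eventually_ge_at_top[of 1]
    proof eventually_elim
      case (elim n)
      have "norm (ln (Sig n) / real n - ln (S n (2 * s)) / real n) = \<bar>ln (Sig n) - ln (S n (2 * s))\<bar> / real n"
        by (simp add: diff_divide_distrib[symmetric] abs_divide)
      also have "\<dots> \<le> Q / real n" using lnb[of n] by (intro divide_right_mono) auto
      finally show ?case .
    qed
    show "(\<lambda>n. Q / real n) \<longlonglongrightarrow> 0" by (rule lim_const_over_n)
  qed
  from Lim_transform[OF P(1)[of "2 * s"] this]
  show ?thesis unfolding ps .
qed

lemma pressure_set: "{s. pressure_seq A \<Lambda> U s \<longlonglongrightarrow> 0} = {ts / 2}"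
proof (intro equalityI subsetI)
  fix s assume "s \<in> {s. pressure_seq A \<Lambda> U s \<longlonglongrightarrow> 0}"
  hence "P (2 * s) = 0" using pressure_lim[of s] LIMSEQ_unique by auto
  hence "2 * s = ts" using P_zero_iff by simp
  thus "s \<in> {ts / 2}" by simp
next
  fix s assume "s \<in> {ts / 2}"
  hence "2 * s = ts" by simp
  hence "P (2 * s) = 0" using ts by simp
  thus "s \<in> {s. pressure_seq A \<Lambda> U s \<longlonglongrightarrow> 0}" using pressure_lim[of s] by simp
qed

lemma crit: "crit_exp A \<Lambda> = ts"
proof -
  have fold: "(\<lambda>n. \<Sum>is\<in>words \<Lambda> (Suc n). mnorm (matw A is) powr (- t)) = (\<lambda>n. S (Suc n) t)" for t
    unfolding S_def ..
  have E: "{t. t \<ge> 0 \<and> \<not> summable (\<lambda>n. \<Sum>is\<in>words \<Lambda> (Suc n). mnorm (matw A is) powr (- t))} = {0..ts}"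
  proof (intro equalityI subsetI)
    fix t assume "t \<in> {t. t \<ge> 0 \<and> \<not> summable (\<lambda>n. \<Sum>is\<in>words \<Lambda> (Suc n). mnorm (matw A is) powr (- t))}"
    hence t: "t \<ge> 0" "\<not> summable (\<lambda>n. S (Suc n) t)" unfolding fold by auto
    show "t \<in> {0..ts}"
    proof (rule ccontr)
      assume "t \<notin> {0..ts}"
      hence "ts < t" using t(1) by simp
      hence Pn: "P t < 0" using P_strict[of ts t] ts(2) by simp
      define Q where "Q = ln (qq t)"
      have b: "S (Suc n) t \<le> exp (Q + P t) * exp (P t) ^ n" for n
      proof -
        have "ln (S (Suc n) t) \<le> real (Suc n) * P t + Q" using P(2)[of "Suc n" t] unfolding Q_def by (simp add: abs_le_iff)
        hence "S (Suc n) t \<le> exp (real (Suc n) * P t + Q)" using S_pos by (metis exp_le_cancel_iff exp_ln)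
        also have "\<dots> = exp (Q + P t) * exp (P t) ^ n"
          by (simp add: exp_add[symmetric] exp_of_nat_mult[symmetric] algebra_simps)
        finally show ?thesis .
      qed
      have "summable (\<lambda>n. exp (Q + P t) * exp (P t) ^ n)"
        using Pn by (intro summable_mult summable_geometric) simp
      hence "summable (\<lambda>n. S (Suc n) t)"
        by (rule summable_comparison_test'[where N = 0]) (use b S_pos in \<open>simp add: less_imp_le\<close>)
      thus False using t(2) by simp
    qed
  next
    fix t assume "t \<in> {0..ts}"
    hence t: "0 \<le> t" "t \<le> ts" by auto
    have Pt: "P t \<ge> 0"
    proof (cases "t = ts")
      case True thus ?thesis using ts by simp
    next
      case False thus ?thesis using P_strict[of t ts] t ts by simp
    qed
    define Q where "Q = ln (qq t)"
    have lb: "exp (- Q) \<le> S (Suc n) t" for n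
    proof -
      have "real (Suc n) * P t - Q \<le> ln (S (Suc n) t)" using P(2)[of "Suc n" t] unfolding Q_def by (simp add: abs_le_iff)
      moreover have "real (Suc n) * P t \<ge> 0" using Pt by simp
      ultimately have "- Q \<le> ln (S (Suc n) t)" by linarith
      thus ?thesis using S_pos by (metis exp_le_cancel_iff exp_ln)
    qed
    have "\<not> summable (\<lambda>n. S (Suc n) t)"
    proof
      assume "summable (\<lambda>n. S (Suc n) t)"
      hence "(\<lambda>n. S (Suc n) t) \<longlonglongrightarrow> 0" by (rule summable_LIMSEQ_zero)
      hence "exp (- Q) \<le> 0" using lb by (intro LIMSEQ_le_const) auto
      thus False by simp
    qed
    thus "t \<in> {t. t \<ge> 0 \<and> \<not> summable (\<lambda>n. \<Sum>is\<in>words \<Lambda> (Suc n). mnorm (matw A is) powr (- t))}"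
      unfolding fold using t by simp
  qed
  show ?thesis unfolding crit_exp_def E using ts(1) by simp
qed

end

context sysg begin

lemma part_i: "\<exists>C'>1. \<forall>n. \<forall>is\<in>words \<Lambda> n. \<forall>x\<in>circ_top closure_of U. \<forall>y\<in>circ_top closure_of U.
            1 / C' \<le> \<bar>cderiv (phiw A is) x\<bar> / \<bar>cderiv (phiw A is) y\<bar> \<and>
            \<bar>cderiv (phiw A is) x\<bar> / \<bar>cderiv (phiw A is) y\<bar> \<le> C'"
proof (intro exI[of _ "2 / kap^2"] conjI allI ballI)
  have k2: "kap^2 > 0" "kap^2 \<le> 1" using kap(1,2) by (auto simp: power_le_one)
  show "1 < 2 / kap^2" using k2 by (simp add: field_simps)
  fix n "is" x y assume w: "is \<in> words \<Lambda> n" and x: "x \<in> circ_top closure_of U" and y: "y \<in> circ_top closure_of U"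
  have sI: "set is \<subseteq> \<Lambda>" using wset[OF w] .
  have xK: "x \<in> K" and yK: "y \<in> K" using x y unfolding K_def by auto
  define m where "m = mnorm (matw A is)"
  define Nx where "Nx = norm (matw A is *v dirv x)"
  define Ny where "Ny = norm (matw A is *v dirv y)"
  have Nx: "kap * m \<le> Nx" "Nx \<le> m" "Nx > 0" unfolding m_def Nx_def
    using kap(3)[OF sI xK] mnorm_ge_dirv Npos[OF sI] by auto
  have Ny: "kap * m \<le> Ny" "Ny \<le> m" "Ny > 0" unfolding m_def Ny_def
    using kap(3)[OF sI yK] mnorm_ge_dirv Npos[OF sI] by auto
  have km: "kap * m > 0" using kap(1) mpos[OF sI] unfolding m_def by simp
  have mp: "m > 0" using mpos[OF sI] unfolding m_def .
  have r: "\<bar>cderiv (phiw A is) x\<bar> / \<bar>cderiv (phiw A is) y\<bar> = Ny^2 / Nx^2"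
    unfolding cd_abs[OF sI] Nx_def[symmetric] Ny_def[symmetric] using Nx(3) Ny(3) by (simp add: field_simps)
  have "Ny^2 / Nx^2 \<le> m^2 / (kap * m)^2"
    using Nx Ny km by (intro frac_le power_mono) auto
  also have "\<dots> = 1 / kap^2" using mp kap(1) by (simp add: field_simps power_mult_distrib)
  also have "\<dots> \<le> 2 / kap^2" using k2 by (simp add: divide_right_mono)
  finally show "\<bar>cderiv (phiw A is) x\<bar> / \<bar>cderiv (phiw A is) y\<bar> \<le> 2 / kap^2" unfolding r .
  have "1 / (2 / kap^2) \<le> kap^2" using k2 by (simp add: field_simps)
  also have "kap^2 = (kap * m)^2 / m^2" using mp kap(1) by (simp add: field_simps power_mult_distrib)
  also have "\<dots> \<le> Ny^2 / Nx^2"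
    using Nx Ny km by (intro frac_le power_mono) auto
  finally show "1 / (2 / kap^2) \<le> \<bar>cderiv (phiw A is) x\<bar> / \<bar>cderiv (phiw A is) y\<bar>" unfolding r .
qed

lemma lam_powr: "lam powr (- 2 * real n) = (1 / lam^2) ^ n"
proof -
  have a: "lam powr (real (2 * n)) = lam ^ (2 * n)" using lam by (intro powr_realpow) simp
  have "lam powr (- 2 * real n) = inverse (lam powr (real (2 * n)))"
    by (simp add: powr_minus[symmetric])
  also have "\<dots> = inverse (lam ^ (2 * n))" unfolding a ..
  also have "\<dots> = (1 / lam^2) ^ n" by (simp add: power_mult power_one_over divide_inverse power_inverse)
  finally show ?thesis .
qed

lemma part_ii_bound: "is \<in> words \<Lambda> n \<Longrightarrow> dnorm U (phiw A is) \<le> (1 / (kap^2 * c^2)) * lam powr (- 2 * real n)"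
proof -
  assume w: "is \<in> words \<Lambda> n"
  have sI: "set is \<subseteq> \<Lambda>" using wset[OF w] .
  define m where "m = mnorm (matw A is)"
  have g: "c * lam ^ n \<le> m" unfolding m_def using growth w by blast
  have cp: "c * lam ^ n > 0" using c_pos lam by simp
  have "dnorm U (phiw A is) \<le> 1 / (kap^2 * m^2)" using dnorm_bounds[OF sI] unfolding m_def by simp
  also have "\<dots> \<le> 1 / (kap^2 * (c * lam ^ n)^2)"
  proof -
    have "(c * lam ^ n)^2 \<le> m^2" using g cp by (intro power_mono) auto
    hence "kap^2 * (c * lam ^ n)^2 \<le> kap^2 * m^2" by (intro mult_left_mono) auto
    moreover have "0 < kap^2 * (c * lam ^ n)^2" using c_pos lam kap(1) by (intro mult_pos_pos zero_less_power) auto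
    ultimately show ?thesis by (intro divide_left_mono) auto
  qed
  also have "\<dots> = (1 / (kap^2 * c^2)) * (1 / lam^2) ^ n"
    by (simp add: power_mult_distrib power_one_over field_simps flip: power_mult)
  finally show ?thesis unfolding lam_powr .
qed

lemma part_ii: "\<exists>C''>0. \<forall>n. \<forall>is\<in>words \<Lambda> n. dnorm U (phiw A is) \<le> C'' * lam powr (- 2 * real n)"
  using part_ii_bound kap(1) c_pos by (intro exI[of _ "1 / (kap^2 * c^2)"]) auto

lemma part_iii: "\<exists>K. \<forall>k\<ge>K. \<forall>is\<in>words \<Lambda> k. dnorm U (phiw A is) < 1"
proof -
  define C where "C = 1 / (kap^2 * c^2)"
  have C: "C > 0" unfolding C_def using kap(1) c_pos by simp
  have r: "0 \<le> 1 / lam^2" "1 / lam^2 < 1" using lam by (auto simp: field_simps)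
  obtain N where N: "(1 / lam^2) ^ N < 1 / C" using real_arch_pow_inv[of "1 / C" "1 / lam^2"] C r by auto
  show ?thesis
  proof (intro exI[of _ N] allI impI ballI)
    fix k "is" assume k: "k \<ge> N" and w: "is \<in> words \<Lambda> k"
    have "dnorm U (phiw A is) \<le> C * (1 / lam^2) ^ k" using part_ii_bound[OF w] unfolding C_def lam_powr .
    also have "\<dots> \<le> C * (1 / lam^2) ^ N" using C r k by (intro mult_left_mono power_decreasing) auto
    also have "\<dots> < C * (1 / C)" using N C by (intro mult_strict_left_mono) auto
    also have "\<dots> = 1" using C by simp
    finally show "dnorm U (phiw A is) < 1" .
  qed
qed

end

theorem lemma3p4:
  fixes A :: "'i \<Rightarrow> real^2^2" and \<Lambda> :: "'i set" and U :: "real set"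
    and c lam :: real
  assumes fin: "finite \<Lambda>" and ne: "\<Lambda> \<noteq> {}"
    and SL2: "\<forall>i\<in>\<Lambda>. det (A i) = 1"
    and mc: "multicone U"
    and inv: "strictly_invariant (\<lambda>i. phiA (A i)) \<Lambda> U"
    and c_pos: "c > 0" and lam: "lam > 1"
    and growth: "\<forall>n. \<forall>is\<in>words \<Lambda> n. mnorm (matw A is) \<ge> c * lam ^ n"
  shows "(\<exists>C'>1. \<forall>n. \<forall>is\<in>words \<Lambda> n. \<forall>x\<in>circ_top closure_of U. \<forall>y\<in>circ_top closure_of U.
            1 / C' \<le> \<bar>cderiv (phiw A is) x\<bar> / \<bar>cderiv (phiw A is) y\<bar> \<and>
            \<bar>cderiv (phiw A is) x\<bar> / \<bar>cderiv (phiw A is) y\<bar> \<le> C')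
     \<and> (\<exists>C''>0. \<forall>n. \<forall>is\<in>words \<Lambda> n. dnorm U (phiw A is) \<le> C'' * lam powr (- 2 * real n))
     \<and> (\<exists>K. \<forall>k\<ge>K. \<forall>is\<in>words \<Lambda> k. dnorm U (phiw A is) < 1)
     \<and> {s. pressure_seq A \<Lambda> U s \<longlonglongrightarrow> 0} = {crit_exp A \<Lambda> / 2}"
proof -
  interpret sysg A \<Lambda> U c lam
    using assms by unfold_locales auto
  show ?thesis using part_i part_ii part_iii pressure_set crit by simp
qed


end
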